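(* Let $k$ be a field of characteristic zero, let $q\in k\setminus\{0\}$ not be a root of unity, and let $\phi\in\{\sigma_x,\tau_{x,q}\}$. Let $f\in k(x,y)$ and suppose $f=\phi(g)-g+D_y(h)+\sum_{i=1}^m a_i/d_i$ with $g,h\in k(x,y)$, where $a_i\in k(x)[y]$ are nonzero, $d_i\in k[x,y]$ are irreducible, $\deg_y(a_i)<\deg_y(d_i)$, and the $d_i$ lie in pairwise distinct $\phi$-orbits. Then $f$ is exact with respect to $(\phi-1,D_y)$ if and only if for each $i\in\{1,\dots,m\}$ we have $d_i\in k[y]$ and $a_i=\phi(b_i)-b_i$ for some $b_i\in k(x)[y]$.
   Context: On $k(x,y)$: $\sigma_x(f(x,y))=f(x+1,y)$, $\tau_{x,q}(f(x,y))=f(qx,y)$, $D_y=\partial/\partial y$. The $\phi$-orbit of a polynomial $p$ is $\{\phi^i(p):i\in\mathbb{Z}\}$. A rational function $f$ is exact with respect to $(\partial_x,\partial_y)$ if $f=\partial_x(g)+\partial_y(h)$ for some $g,h\in k(x,y)$. The decomposition in the hypothesis is called a $(\phi,D_y)$-reduced form of $f$. *)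

theory Defs
  imports "HOL-Computational_Algebra.Computational_Algebra"
begin

text \<open>Representation.
  k(x)      = 'a poly fract
  k(x)[y]   = 'a poly fract poly   (outer variable is y)
  k[x,y]    = 'a poly poly         (inner variable x, outer variable y)
  k(x,y)    = 'a poly fract poly fract\<close>

datatype op_kind = Shift | QShift   \<comment> \<open>Shift: sigma_x (x -> x+1); QShift: tau_{x,q} (x -> q x)\<close>

definition xsub :: "op_kind \<Rightarrow> 'a::field_char_0 \<Rightarrow> int \<Rightarrow> 'a poly" where
  "xsub kd q n = (case kd of Shift \<Rightarrow> [:of_int n, 1:] | QShift \<Rightarrow> [:0, q powi n:])"

definition phi_pow_xy :: "op_kind \<Rightarrow> 'a::field_char_0 \<Rightarrow> int \<Rightarrow> 'a poly poly \<Rightarrow> 'a poly poly" where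
  "phi_pow_xy kd q n d = map_poly (\<lambda>c. pcompose c (xsub kd q n)) d"

definition phi_x :: "op_kind \<Rightarrow> 'a::field_char_0 \<Rightarrow> 'a poly fract \<Rightarrow> 'a poly fract" where
  "phi_x kd q r = (SOME r'. \<exists>a b. b \<noteq> 0 \<and> r = Fract a b \<and>
       r' = Fract (pcompose a (xsub kd q 1)) (pcompose b (xsub kd q 1)))"

definition phi_y :: "op_kind \<Rightarrow> 'a::field_char_0 \<Rightarrow> 'a poly fract poly \<Rightarrow> 'a poly fract poly" where
  "phi_y kd q p = map_poly (phi_x kd q) p"

definition phi_xy :: "op_kind \<Rightarrow> 'a::field_char_0 \<Rightarrow> 'a poly fract poly fract \<Rightarrow> 'a poly fract poly fract" where
  "phi_xy kd q r = (SOME r'. \<exists>a b. b \<noteq> 0 \<and> r = Fract a b \<and>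
       r' = Fract (phi_y kd q a) (phi_y kd q b))"

definition Dy :: "'a::field_char_0 poly fract poly fract \<Rightarrow> 'a poly fract poly fract" where
  "Dy r = (SOME r'. \<exists>a b. b \<noteq> 0 \<and> r = Fract a b \<and>
       r' = Fract (pderiv a * b - a * pderiv b) (b * b))"

definition exact_phi :: "op_kind \<Rightarrow> 'a::field_char_0 \<Rightarrow> 'a poly fract poly fract \<Rightarrow> bool" where
  "exact_phi kd q f \<longleftrightarrow> (\<exists>g h. f = phi_xy kd q g - g + Dy h)"

definition same_orbit :: "op_kind \<Rightarrow> 'a::field_char_0 \<Rightarrow> 'a poly poly \<Rightarrow> 'a poly poly \<Rightarrow> bool" where
  "same_orbit kd q d e \<longleftrightarrow> (\<exists>n c. c \<noteq> 0 \<and> e = smult [:c:] (phi_pow_xy kd q n d))"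

abbreviation emb_xy :: "'a::field_char_0 poly poly \<Rightarrow> 'a poly fract poly" where
  "emb_xy d \<equiv> map_poly to_fract d"

end

theory Submission
  imports Defs
begin

lemma xsub_degree: "(q::'a::field_char_0) \<noteq> 0 \<Longrightarrow> degree (xsub kd q n) = 1"
  by (cases kd) (auto simp: xsub_def)

lemma xsub_comp: "(q::'a::field_char_0) \<noteq> 0 \<Longrightarrow> pcompose (xsub kd q n) (xsub kd q m) = xsub kd q (n + m)"
  by (cases kd) (auto simp: xsub_def pcompose_pCons power_int_add algebra_simps)

lemma xsub_0: "xsub kd q 0 = [:0, 1:]"
  by (cases kd) (auto simp: xsub_def)

lemma pcomp_xsub_eq0: "(q::'a::field_char_0) \<noteq> 0 \<Longrightarrow> pcompose c (xsub kd q n) = 0 \<longleftrightarrow> c = 0"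
  using pcompose_eq_0[of c "xsub kd q n"] xsub_degree[of q kd n] by auto

lemma pcomp_xsub_comp: "(q::'a::field_char_0) \<noteq> 0 \<Longrightarrow>
   pcompose (pcompose c (xsub kd q n)) (xsub kd q m) = pcompose c (xsub kd q (n+m))"
  by (metis pcompose_assoc xsub_comp)

lemma some_Fract_eq:
  assumes "b \<noteq> 0" and "\<And>a' b'. b' \<noteq> 0 \<Longrightarrow> Fract a b = Fract a' b' \<Longrightarrow> F a' b' = F a b"
  shows "(SOME r. \<exists>a' b'. b' \<noteq> 0 \<and> Fract a b = Fract a' b' \<and> r = F a' b') = F a b"
  by (rule some_equality) (use assms in blast)+

definition phn :: "op_kind \<Rightarrow> 'a::field_char_0 \<Rightarrow> int \<Rightarrow> 'a poly fract \<Rightarrow> 'a poly fract" where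
  "phn kd q n r = (SOME r'. \<exists>a b. b \<noteq> 0 \<and> r = Fract a b \<and>
       r' = Fract (pcompose a (xsub kd q n)) (pcompose b (xsub kd q n)))"

lemma phi_x_phn: "phi_x kd q = phn kd q 1"
  by (rule ext) (simp add: phi_x_def phn_def)

lemma phn_Fract:
  assumes q: "q \<noteq> 0" and b: "b \<noteq> 0"
  shows "phn kd q n (Fract a b) = Fract (pcompose a (xsub kd q n)) (pcompose b (xsub kd q n))"
unfolding phn_def
proof (rule some_Fract_eq[OF b])
  let ?s = "xsub kd q n"
  show "Fract (pcompose a' ?s) (pcompose b' ?s) = Fract (pcompose a ?s) (pcompose b ?s)"
    if "b' \<noteq> 0" "Fract a b = Fract a' b'" for a' b'
  proof -
    from that b have "a * b' = a' * b" by (simp add: eq_fract)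
    hence "pcompose (a * b') ?s = pcompose (a' * b) ?s" by simp
    thus ?thesis using that b q by (simp add: eq_fract pcompose_mult pcomp_xsub_eq0)
  qed
qed


context
  fixes kd :: op_kind and q :: "'a::field_char_0"
  assumes q: "q \<noteq> 0"
begin

lemma phn_add: "phn kd q n (x + y) = phn kd q n x + phn kd q n y"
proof (cases x, cases y)
  fix a b c d assume x: "x = Fract a b" "b \<noteq> 0" and y: "y = Fract c d" "d \<noteq> 0"
  show ?thesis using x y q
    by (simp add: phn_Fract pcomp_xsub_eq0 pcompose_add pcompose_mult)
qed

lemma phn_mult: "phn kd q n (x * y) = phn kd q n x * phn kd q n y"
proof (cases x, cases y)
  fix a b c d assume x: "x = Fract a b" "b \<noteq> 0" and y: "y = Fract c d" "d \<noteq> 0"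
  show ?thesis using x y q
    by (simp add: phn_Fract pcomp_xsub_eq0 pcompose_add pcompose_mult)
qed

lemma phn_0 [simp]: "phn kd q n 0 = 0"
  using q by (subst (1 2) Zero_fract_def) (simp add: phn_Fract eq_fract)

lemma phn_1 [simp]: "phn kd q n 1 = 1"
  using q by (subst (1 2) One_fract_def) (simp add: phn_Fract pcompose_1)

lemma phn_minus: "phn kd q n (- x) = - phn kd q n x"
proof -
  have "phn kd q n (- x) + phn kd q n x = phn kd q n (- x + x)" by (rule phn_add[symmetric])
  also have "\<dots> = 0" by simp
  finally have "phn kd q n (- x) + phn kd q n x = 0" .
  thus ?thesis by (simp add: eq_neg_iff_add_eq_0)
qed

lemma phn_diff: "phn kd q n (x - y) = phn kd q n x - phn kd q n y"
  by (simp only: diff_conv_add_uminus phn_add phn_minus)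

lemma phn_of_nat [simp]: "phn kd q n (of_nat k) = of_nat k"
  by (induction k) (simp_all add: phn_add)

lemma phn_to_fract: "phn kd q n (to_fract c) = to_fract (pcompose c (xsub kd q n))"
  using q by (simp add: to_fract_def phn_Fract pcompose_1)

lemma phn_comp: "phn kd q n (phn kd q m x) = phn kd q (m + n) x"
proof (cases x)
  fix a b assume x: "x = Fract a b" "b \<noteq> 0"
  show ?thesis using x q
    by (simp add: phn_Fract pcomp_xsub_eq0 pcomp_xsub_comp)
qed

lemma phn_zero_id [simp]: "phn kd q 0 x = x"
proof (cases x)
  fix a b assume x: "x = Fract a b" "b \<noteq> 0"
  show ?thesis using x q
    by (simp add: phn_Fract xsub_0)
qed

lemma phn_inv: "phn kd q (-n) (phn kd q n x) = x"
  by (simp add: phn_comp)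

lemma phn_inj: "phn kd q n x = phn kd q n y \<longleftrightarrow> x = y"
proof
  assume "phn kd q n x = phn kd q n y"
  hence "phn kd q (-n) (phn kd q n x) = phn kd q (-n) (phn kd q n y)" by simp
  thus "x = y" by (simp only: phn_inv)
qed simp

lemma phn_eq_0_iff [simp]: "phn kd q n x = 0 \<longleftrightarrow> x = 0"
  using phn_inj[of n x 0] by simp

end

lemma map_poly_add_hom:
  assumes "\<And>x y. f (x + y) = f x + f y" "f 0 = 0"
  shows "map_poly f (p + r) = map_poly f p + map_poly f r"
  by (intro poly_eqI) (simp add: coeff_map_poly assms)

lemma map_poly_mult_hom:
  fixes f :: "'a::comm_ring_1 \<Rightarrow> 'b::comm_ring_1"
  assumes add: "\<And>x y. f (x + y) = f x + f y" and mult: "\<And>x y. f (x * y) = f x * f y" and z: "f 0 = 0"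
  shows "map_poly f (p * r) = map_poly f p * map_poly f r"
proof (induction p)
  case 0 then show ?case by simp
next
  case (pCons a p)
  have "map_poly f (pCons a p * r) = map_poly f (smult a r + pCons 0 (p * r))" by simp
  also have "\<dots> = smult (f a) (map_poly f r) + pCons 0 (map_poly f p * map_poly f r)"
    by (simp add: map_poly_add_hom[of f, OF add z] map_poly_smult[of f, OF z mult] map_poly_pCons[of f, OF z] pCons.IH z)
  also have "\<dots> = map_poly f (pCons a p) * map_poly f r"
    by (simp add: map_poly_pCons[of f, OF z])
  finally show ?case .
qed


definition phy :: "op_kind \<Rightarrow> 'a::field_char_0 \<Rightarrow> int \<Rightarrow> 'a poly fract poly \<Rightarrow> 'a poly fract poly" where
  "phy kd q n p = map_poly (phn kd q n) p"

lemma phi_y_phy: "phi_y kd q = phy kd q 1"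
  by (rule ext) (simp add: phi_y_def phy_def phi_x_phn)

context
  fixes kd :: op_kind and q :: "'a::field_char_0"
  assumes q: "q \<noteq> 0"
begin

lemma coeff_phy: "coeff (phy kd q n p) j = phn kd q n (coeff p j)"
  using q by (simp add: phy_def coeff_map_poly)

lemma phy_add: "phy kd q n (x + y) = phy kd q n x + phy kd q n y"
  by (rule poly_eqI) (simp add: coeff_phy phn_add q)

lemma phy_diff: "phy kd q n (x - y) = phy kd q n x - phy kd q n y"
  by (rule poly_eqI) (simp add: coeff_phy phn_diff q)

lemma phy_minus: "phy kd q n (- x) = - phy kd q n x"
  by (rule poly_eqI) (simp add: coeff_phy phn_minus q)

lemma phy_0 [simp]: "phy kd q n 0 = 0"
  by (rule poly_eqI) (simp add: coeff_phy q)

lemma phy_mult: "phy kd q n (x * y) = phy kd q n x * phy kd q n y"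
  unfolding phy_def by (rule map_poly_mult_hom) (simp_all add: q phn_add phn_mult)

lemma phy_1 [simp]: "phy kd q n 1 = 1"
  unfolding phy_def using q by simp

lemma phy_comp: "phy kd q n (phy kd q m p) = phy kd q (m + n) p"
  by (rule poly_eqI) (simp add: coeff_phy phn_comp q)

lemma phy_inv: "phy kd q (-n) (phy kd q n p) = p"
  by (rule poly_eqI) (simp add: coeff_phy phn_comp q)

lemma phy_inj: "phy kd q n x = phy kd q n y \<longleftrightarrow> x = y"
proof
  assume "phy kd q n x = phy kd q n y"
  hence "phy kd q (-n) (phy kd q n x) = phy kd q (-n) (phy kd q n y)" by simp
  thus "x = y" by (simp only: phy_inv)
qed simp

lemma phy_eq_0_iff [simp]: "phy kd q n x = 0 \<longleftrightarrow> x = 0"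
  using phy_inj[of n x 0] by simp

lemma degree_phy [simp]: "degree (phy kd q n p) = degree p"
  unfolding phy_def by (rule degree_map_poly) (simp add: q)

lemma phy_pderiv: "pderiv (phy kd q n p) = phy kd q n (pderiv p)"
proof (rule poly_eqI)
  fix j
  have "phn kd q n (of_nat (Suc j) * coeff p (Suc j)) = of_nat (Suc j) * phn kd q n (coeff p (Suc j))"
    by (simp only: phn_mult[OF q] phn_of_nat[OF q])
  thus "coeff (pderiv (phy kd q n p)) j = coeff (phy kd q n (pderiv p)) j"
    by (simp add: coeff_pderiv coeff_phy)
qed

lemma phy_dvd_iff: "phy kd q n s dvd phy kd q n y \<longleftrightarrow> s dvd y"
proof
  assume "phy kd q n s dvd phy kd q n y"
  then obtain z where "phy kd q n y = phy kd q n s * z" by (elim dvdE)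
  hence "phy kd q (-n) (phy kd q n y) = phy kd q (-n) (phy kd q n s * z)" by simp
  hence "y = s * phy kd q (-n) z" by (simp only: phy_mult phy_inv)
  thus "s dvd y" by simp
next
  assume "s dvd y"
  then obtain z where "y = s * z" by (elim dvdE)
  thus "phy kd q n s dvd phy kd q n y" by (simp add: phy_mult)
qed

lemma phi_pow_coeff: "coeff (phi_pow_xy kd q n d) j = pcompose (coeff d j) (xsub kd q n)"
  by (simp add: phi_pow_xy_def coeff_map_poly)

lemma phy_emb: "phy kd q n (emb_xy d) = emb_xy (phi_pow_xy kd q n d)"
  by (rule poly_eqI) (simp add: coeff_phy coeff_map_poly phi_pow_coeff phn_to_fract q)

lemma phi_pow_comp: "phi_pow_xy kd q n (phi_pow_xy kd q m d) = phi_pow_xy kd q (m + n) d"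
  by (rule poly_eqI) (simp add: phi_pow_coeff pcomp_xsub_comp q)

lemma phi_pow_zero [simp]: "phi_pow_xy kd q 0 d = d"
  by (rule poly_eqI) (simp add: phi_pow_coeff xsub_0)

lemma phi_pow_inv: "phi_pow_xy kd q (-n) (phi_pow_xy kd q n d) = d"
  by (simp add: phi_pow_comp)

lemma phi_pow_mult: "phi_pow_xy kd q n (x * y) = phi_pow_xy kd q n x * phi_pow_xy kd q n y"
  unfolding phi_pow_xy_def by (rule map_poly_mult_hom) (simp_all add: pcompose_add pcompose_mult)

lemma phi_pow_1 [simp]: "phi_pow_xy kd q n 1 = 1"
  unfolding phi_pow_xy_def by (simp add: pcompose_1)

lemma phi_pow_eq_0_iff [simp]: "phi_pow_xy kd q n x = 0 \<longleftrightarrow> x = 0"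
  by (metis phi_pow_inv map_poly_0 phi_pow_xy_def pcompose_0)

lemma degree_phi_pow [simp]: "degree (phi_pow_xy kd q n p) = degree p"
  unfolding phi_pow_xy_def by (rule degree_map_poly) (simp add: q pcomp_xsub_eq0)

lemma irreducible_phi_pow:
  assumes "irreducible d" shows "irreducible (phi_pow_xy kd q n d)"
proof (rule irreducibleI)
  show "phi_pow_xy kd q n d \<noteq> 0" using assms by auto
  show "\<not> is_unit (phi_pow_xy kd q n d)"
  proof
    assume "is_unit (phi_pow_xy kd q n d)"
    then obtain v where "1 = phi_pow_xy kd q n d * v" by (elim dvdE)
    hence "phi_pow_xy kd q (-n) 1 = phi_pow_xy kd q (-n) (phi_pow_xy kd q n d * v)" by simp
    hence "1 = d * phi_pow_xy kd q (-n) v" by (simp only: phi_pow_mult phi_pow_inv phi_pow_1)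
    hence "is_unit d" by (metis dvdI)
    with assms show False by (simp add: irreducible_def)
  qed
  fix x y assume xy: "phi_pow_xy kd q n d = x * y"
  hence "phi_pow_xy kd q (-n) (phi_pow_xy kd q n d) = phi_pow_xy kd q (-n) (x * y)" by simp
  hence "d = phi_pow_xy kd q (-n) x * phi_pow_xy kd q (-n) y" by (simp only: phi_pow_mult phi_pow_inv)
  with assms have "is_unit (phi_pow_xy kd q (-n) x) \<or> is_unit (phi_pow_xy kd q (-n) y)"
    by (rule irreducibleD)
  moreover have "is_unit z" if "is_unit (phi_pow_xy kd q (-n) z)" for z
  proof -
    from that obtain v where "1 = phi_pow_xy kd q (-n) z * v" by (elim dvdE)
    hence "phi_pow_xy kd q n 1 = phi_pow_xy kd q n (phi_pow_xy kd q (-n) z * v)" by simp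
    hence "1 = z * phi_pow_xy kd q n v" by (simp add: phi_pow_mult phi_pow_comp)
    thus ?thesis by (metis dvdI)
  qed
  ultimately show "is_unit x \<or> is_unit y" by blast
qed

end

lemma Dy_wd:
  fixes a b a2 b2 :: "'a::field_char_0 poly fract poly"
  assumes E1: "a * b2 = a2 * b"
  shows "(pderiv a * b - a * pderiv b) * (b2 * b2) = (pderiv a2 * b2 - a2 * pderiv b2) * (b * b)"
proof -
  have E2: "a * pderiv b2 + b2 * pderiv a = a2 * pderiv b + b * pderiv a2"
    using arg_cong[OF E1, of pderiv] by (simp add: pderiv_mult)
  show ?thesis using E1 E2 by algebra
qed

lemma Dy_Fract:
  fixes a b :: "'a::field_char_0 poly fract poly"
  assumes b: "b \<noteq> 0"
  shows "Dy (Fract a b) = Fract (pderiv a * b - a * pderiv b) (b * b)"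
  unfolding Dy_def
proof (rule some_Fract_eq[OF b])
  fix a' b' :: "'a poly fract poly" assume "b' \<noteq> 0" "Fract a b = Fract a' b'"
  hence "a * b' = a' * b" using b by (simp add: eq_fract)
  from Dy_wd[OF this] show "Fract (pderiv a' * b' - a' * pderiv b') (b' * b') = Fract (pderiv a * b - a * pderiv b) (b * b)"
    using b \<open>b' \<noteq> 0\<close> by (simp add: eq_fract)
qed

lemma Dy_add: "Dy (x + y) = Dy x + Dy y"
proof (cases x, cases y)
  fix a b c d :: "'a::field_char_0 poly fract poly"
  assume x: "x = Fract a b" "b \<noteq> 0" and y: "y = Fract c d" "d \<noteq> 0"
  have "(pderiv (a * d + c * b) * (b * d) - (a * d + c * b) * pderiv (b * d)) * (b * b * (d * d)) =
        ((pderiv a * b - a * pderiv b) * (d * d) + (pderiv c * d - c * pderiv d) * (b * b)) * (b * d * (b * d))"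
    by (simp add: pderiv_mult pderiv_add) algebra
  thus ?thesis using x y by (simp add: Dy_Fract eq_fract)
qed

lemma Dy_0 [simp]: "Dy 0 = 0"
  by (subst (1 2) Zero_fract_def) (simp add: Dy_Fract)

lemma Dy_minus: "Dy (- x) = - Dy x"
proof -
  have "Dy (- x) + Dy x = Dy (- x + x)" by (rule Dy_add[symmetric])
  also have "\<dots> = 0" by simp
  finally have "Dy (- x) + Dy x = 0" .
  thus ?thesis by (simp add: eq_neg_iff_add_eq_0)
qed

lemma Dy_diff: "Dy (x - y) = Dy x - Dy y"
  by (simp only: diff_conv_add_uminus Dy_add Dy_minus)

context
  fixes kd :: op_kind and q :: "'a::field_char_0"
  assumes q: "q \<noteq> 0"
begin

lemma phi_xy_Fract:
  assumes b: "b \<noteq> 0"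
  shows "phi_xy kd q (Fract a b) = Fract (phy kd q 1 a) (phy kd q 1 b)"
  unfolding phi_xy_def phi_y_phy
proof (rule some_Fract_eq[OF b])
  fix a' b' :: "'a poly fract poly" assume "b' \<noteq> 0" "Fract a b = Fract a' b'"
  hence "a * b' = a' * b" using b by (simp add: eq_fract)
  hence "phy kd q 1 (a * b') = phy kd q 1 (a' * b)" by simp
  thus "Fract (phy kd q 1 a') (phy kd q 1 b') = Fract (phy kd q 1 a) (phy kd q 1 b)"
    using b \<open>b' \<noteq> 0\<close> by (simp add: eq_fract phy_mult q)
qed

lemma phi_xy_add: "phi_xy kd q (x + y) = phi_xy kd q x + phi_xy kd q y"
proof (cases x, cases y)
  fix a b c d :: "'a poly fract poly"
  assume x: "x = Fract a b" "b \<noteq> 0" and y: "y = Fract c d" "d \<noteq> 0"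
  show ?thesis using x y q by (simp add: phi_xy_Fract phy_mult phy_add)
qed

lemma phi_xy_0 [simp]: "phi_xy kd q 0 = 0"
  by (subst (1 2) Zero_fract_def) (simp add: phi_xy_Fract q)

lemma phi_xy_minus: "phi_xy kd q (- x) = - phi_xy kd q x"
proof -
  have "phi_xy kd q (- x) + phi_xy kd q x = phi_xy kd q (- x + x)" by (rule phi_xy_add[symmetric])
  also have "\<dots> = 0" by simp
  finally have "phi_xy kd q (- x) + phi_xy kd q x = 0" .
  thus ?thesis by (simp add: eq_neg_iff_add_eq_0)
qed

lemma phi_xy_diff: "phi_xy kd q (x - y) = phi_xy kd q x - phi_xy kd q y"
  by (simp only: diff_conv_add_uminus phi_xy_add phi_xy_minus)

lemma phi_xy_sum: "phi_xy kd q (sum f A) = sum (\<lambda>i. phi_xy kd q (f i)) A"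
  by (induction A rule: infinite_finite_induct) (simp_all add: phi_xy_add)

lemma Dy_phi: "Dy (phi_xy kd q x) = phi_xy kd q (Dy x)"
proof (cases x)
  fix a b :: "'a poly fract poly"
  assume x: "x = Fract a b" "b \<noteq> 0"
  show ?thesis using x q by (simp add: phi_xy_Fract Dy_Fract phy_mult phy_diff phy_pderiv)
qed

lemma phi_iter_Fract:
  assumes b: "b \<noteq> 0"
  shows "(phi_xy kd q ^^ j) (Fract a b) = Fract (phy kd q (int j) a) (phy kd q (int j) b)"
proof (induction j)
  case 0
  have "phy kd q 0 p = p" for p by (rule poly_eqI) (simp add: coeff_phy q)
  then show ?case by simp
next
  case (Suc j)
  have "phy kd q (int j) b \<noteq> 0" using b q by simp
  then show ?case using Suc q by (simp add: phi_xy_Fract phy_comp add.commute)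
qed

lemma phi_iter_add: "(phi_xy kd q ^^ j) (x + y) = (phi_xy kd q ^^ j) x + (phi_xy kd q ^^ j) y"
  by (induction j) (simp_all add: phi_xy_add)

lemma phi_iter_diff: "(phi_xy kd q ^^ j) (x - y) = (phi_xy kd q ^^ j) x - (phi_xy kd q ^^ j) y"
  by (induction j) (simp_all add: phi_xy_diff)

lemma phi_iter_Dy: "(phi_xy kd q ^^ j) (Dy x) = Dy ((phi_xy kd q ^^ j) x)"
  by (induction j) (simp_all add: Dy_phi)

end

lemma prime_degree_pos:
  fixes p :: "'b::field poly"
  assumes "prime_elem p" shows "degree p > 0"
  using assms is_unit_iff_degree[of p] prime_elem_not_unit[of p] by (auto simp: prime_elem_def)

lemma bezout_prime:
  fixes p B :: "'b::field poly"
  assumes p: "prime_elem p" and nd: "\<not> p dvd B"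
  shows "\<exists>s t. s * p + t * B = 1"
proof -
  define I where "I = {g. \<exists>s t. g = s * p + t * B}"
  have "B = 0 * p + 1 * B" by simp
  hence BI: "B \<in> I" unfolding I_def by blast
  have B0: "B \<noteq> 0" using nd by auto
  have ex: "\<exists>n g. g \<in> I \<and> g \<noteq> 0 \<and> degree g = n" using BI B0 by blast
  define n where "n = (LEAST n. \<exists>g. g \<in> I \<and> g \<noteq> 0 \<and> degree g = n)"
  obtain g where g: "g \<in> I" "g \<noteq> 0" "degree g = n"
    using LeastI_ex[OF ex] unfolding n_def by blast
  have min: "n \<le> degree g'" if "g' \<in> I" "g' \<noteq> 0" for g'
    unfolding n_def by (rule Least_le) (use that in blast)
  have Imod: "x mod g \<in> I" if "x \<in> I" for x
  proof -
    from that obtain s t where x: "x = s * p + t * B" unfolding I_def by blast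
    from g(1) obtain s' t' where g': "g = s' * p + t' * B" unfolding I_def by blast
    have "x mod g = x - (x div g) * g" by (simp add: mod_div_mult_eq[symmetric] algebra_simps)
    also have "\<dots> = (s - x div g * s') * p + (t - x div g * t') * B" by (simp add: x g' algebra_simps)
    finally show ?thesis unfolding I_def by blast
  qed
  have dvdI: "g dvd x" if "x \<in> I" for x
  proof (rule ccontr)
    assume "\<not> g dvd x"
    hence "x mod g \<noteq> 0" by (simp add: mod_eq_0_iff_dvd)
    hence "degree (x mod g) < degree g" using degree_mod_less'[OF g(2)] by blast
    moreover have "n \<le> degree (x mod g)" by (rule min[OF Imod[OF that] \<open>x mod g \<noteq> 0\<close>])
    ultimately show False using g(3) by simp
  qed
  have "p = 1 * p + 0 * B" by simp
  hence pI: "p \<in> I" unfolding I_def by blast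
  from dvdI[OF pI] obtain h where h: "p = g * h" by (elim dvdE)
  have "irreducible p" using p by (rule prime_elem_imp_irreducible)
  hence "is_unit g \<or> is_unit h" using h by (rule irreducibleD)
  moreover have "\<not> is_unit h"
  proof
    assume "is_unit h"
    hence "p dvd g" using h by (metis dvd_mult_unit_iff dvd_refl)
    hence "p dvd B" using dvdI[OF BI] by (rule dvd_trans)
    with nd show False by simp
  qed
  ultimately have "is_unit g" by blast
  then obtain v where v: "1 = g * v" by (elim dvdE)
  from g(1) obtain s t where "g = s * p + t * B" unfolding I_def by blast
  hence "1 = (v * s) * p + (v * t) * B" using v by (simp add: algebra_simps)
  thus ?thesis by metis
qed

lemma decomp_prime:
  fixes p B :: "'b::field poly"
  assumes p: "prime_elem p" and B: "B \<noteq> 0"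
  shows "\<exists>e B0. B = p ^ e * B0 \<and> \<not> p dvd B0"
  using B
proof (induction "degree B" arbitrary: B rule: less_induct)
  case less
  show ?case
  proof (cases "p dvd B")
    case False thus ?thesis by (intro exI[of _ 0] exI[of _ B]) auto
  next
    case True
    then obtain B1 where B1: "B = p * B1" by (elim dvdE)
    have nz: "B1 \<noteq> 0" "p \<noteq> 0" using less.prems B1 by auto
    have "degree B = degree p + degree B1" using B1 nz by (simp add: degree_mult_eq)
    hence "degree B1 < degree B" using prime_degree_pos[OF p] by simp
    from less.hyps[OF this nz(1)] obtain e B0 where "B1 = p ^ e * B0" "\<not> p dvd B0" by blast
    thus ?thesis using B1 by (intro exI[of _ "Suc e"] exI[of _ B0]) (simp add: algebra_simps)
  qed
qed


type_synonym 'a R = "'a poly fract poly"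
type_synonym 'a F = "'a poly fract poly fract"

definition Ox :: "'a::field_char_0 R \<Rightarrow> 'a F set" where
  "Ox s = {u. \<exists>X Y. Y \<noteq> 0 \<and> \<not> s dvd Y \<and> u = Fract X Y}"

definition Wx :: "'a::field_char_0 R \<Rightarrow> 'a F set" where
  "Wx s = {u. \<exists>H w. w \<in> Ox s \<and> u = Dy H + w}"

lemma Ox_Fract: "Y \<noteq> 0 \<Longrightarrow> \<not> s dvd Y \<Longrightarrow> Fract X Y \<in> Ox s"
  unfolding Ox_def by blast

lemma Fract_0_left: "Fract 0 b = 0"
proof -
  have "Fract 0 b = Fract 0 1" by (rule eq_fract(3))
  also have "\<dots> = 0" by (rule Zero_fract_def[symmetric])
  finally show ?thesis .
qed

context
  fixes s :: "'a::field_char_0 R"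
  assumes s: "prime_elem s"
begin

lemma s_nz: "s \<noteq> 0" using s by auto

lemma Ox_0: "0 \<in> Ox s"
proof -
  have "\<not> s dvd 1" using s by (simp add: prime_elem_not_unit)
  hence "Fract 0 1 \<in> Ox s" by (intro Ox_Fract) auto
  thus ?thesis by (simp add: Fract_0_left)
qed

lemma Ox_add: "u \<in> Ox s \<Longrightarrow> v \<in> Ox s \<Longrightarrow> u + v \<in> Ox s"
proof -
  assume "u \<in> Ox s" "v \<in> Ox s"
  then obtain X Y X2 Y2 where "Y \<noteq> 0" "\<not> s dvd Y" "u = Fract X Y" "Y2 \<noteq> 0" "\<not> s dvd Y2" "v = Fract X2 Y2"
    unfolding Ox_def by blast
  moreover have "\<not> s dvd Y * Y2" using s calculation by (simp add: prime_elem_dvd_mult_iff)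
  moreover have "u + v = Fract (X * Y2 + X2 * Y) (Y * Y2)" using calculation by simp
  ultimately show ?thesis using Ox_Fract[of "Y * Y2" s] by auto
qed

lemma Ox_minus: "u \<in> Ox s \<Longrightarrow> - u \<in> Ox s"
proof -
  assume "u \<in> Ox s"
  then obtain X Y where "Y \<noteq> 0" "\<not> s dvd Y" "u = Fract X Y" unfolding Ox_def by blast
  thus ?thesis using Ox_Fract[of Y s "- X"] by simp
qed

lemma Ox_diff: "u \<in> Ox s \<Longrightarrow> v \<in> Ox s \<Longrightarrow> u - v \<in> Ox s"
  using Ox_add Ox_minus by (metis diff_conv_add_uminus)

lemma Ox_Wx: "w \<in> Ox s \<Longrightarrow> w \<in> Wx s"
proof -
  assume "w \<in> Ox s"
  moreover have "w = Dy 0 + w" by simp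
  ultimately show ?thesis unfolding Wx_def by blast
qed

lemma Dy_Wx: "Dy H \<in> Wx s"
proof -
  have "Dy H = Dy H + 0" by simp
  thus ?thesis unfolding Wx_def using Ox_0 by blast
qed

lemma Wx_add: "u \<in> Wx s \<Longrightarrow> v \<in> Wx s \<Longrightarrow> u + v \<in> Wx s"
proof -
  assume "u \<in> Wx s" "v \<in> Wx s"
  then obtain H1 w1 H2 w2 where "w1 \<in> Ox s" "u = Dy H1 + w1" "w2 \<in> Ox s" "v = Dy H2 + w2"
    unfolding Wx_def by blast
  moreover have "Dy H1 + w1 + (Dy H2 + w2) = Dy (H1 + H2) + (w1 + w2)" by (simp add: Dy_add)
  ultimately show ?thesis unfolding Wx_def using Ox_add by blast
qed

lemma Wx_minus: "u \<in> Wx s \<Longrightarrow> - u \<in> Wx s"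
proof -
  assume "u \<in> Wx s"
  then obtain H1 w1 where "w1 \<in> Ox s" "u = Dy H1 + w1" unfolding Wx_def by blast
  moreover have "- (Dy H1 + w1) = Dy (- H1) + (- w1)" by (simp add: Dy_minus)
  ultimately show ?thesis unfolding Wx_def using Ox_minus by blast
qed

lemma Wx_diff: "u \<in> Wx s \<Longrightarrow> v \<in> Wx s \<Longrightarrow> u - v \<in> Wx s"
  using Wx_add Wx_minus by (metis diff_conv_add_uminus)

lemma Wx_0: "0 \<in> Wx s" using Ox_Wx Ox_0 by blast

lemma Wx_sum: "(\<And>i. i \<in> A \<Longrightarrow> f i \<in> Wx s) \<Longrightarrow> sum f A \<in> Wx s"
  by (induction A rule: infinite_finite_induct) (simp_all add: Wx_0 Wx_add)

lemma Ox_sum: "(\<And>i. i \<in> A \<Longrightarrow> f i \<in> Ox s) \<Longrightarrow> sum f A \<in> Ox s"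
  by (induction A rule: infinite_finite_induct) (simp_all add: Ox_0 Ox_add)

end

context
  fixes kd :: op_kind and q :: "'a::field_char_0"
  assumes q: "q \<noteq> 0"
begin

lemma Ox_phi_iter: "u \<in> Ox s \<Longrightarrow> (phi_xy kd q ^^ j) u \<in> Ox (phy kd q (int j) s)"
proof -
  assume "u \<in> Ox s"
  then obtain X Y where "Y \<noteq> 0" "\<not> s dvd Y" "u = Fract X Y" unfolding Ox_def by blast
  thus ?thesis using q Ox_Fract[of "phy kd q (int j) Y" "phy kd q (int j) s" "phy kd q (int j) X"]
    by (simp add: phi_iter_Fract phy_dvd_iff)
qed

lemma Wx_phi_iter: "u \<in> Wx s \<Longrightarrow> (phi_xy kd q ^^ j) u \<in> Wx (phy kd q (int j) s)"
proof -
  assume "u \<in> Wx s"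
  then obtain H w where "w \<in> Ox s" "u = Dy H + w" unfolding Wx_def by blast
  moreover have "(phi_xy kd q ^^ j) (Dy H + w) = Dy ((phi_xy kd q ^^ j) H) + (phi_xy kd q ^^ j) w"
    using q by (simp add: phi_iter_add phi_iter_Dy)
  ultimately show ?thesis unfolding Wx_def using Ox_phi_iter by blast
qed

end


lemma Fract_eq_0_iff: "b \<noteq> 0 \<Longrightarrow> Fract a b = 0 \<longleftrightarrow> a = 0"
proof -
  assume b: "b \<noteq> 0"
  have "Fract a b = Fract 0 1 \<longleftrightarrow> a = 0" using b by (simp add: eq_fract)
  thus ?thesis by (simp only: Zero_fract_def[symmetric])
qed

lemma of_nat_Suc_fract_nz: "(of_nat (Suc k) :: 'a::field_char_0 poly fract) \<noteq> 0"
proof -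
  have "(of_nat (Suc k) :: 'a poly) = [:of_nat (Suc k):]" by (rule of_nat_poly)
  moreover have "(of_nat (Suc k) :: 'a) \<noteq> 0" by (rule of_nat_neq_0)
  ultimately have nz: "(of_nat (Suc k) :: 'a poly) \<noteq> 0" by simp
  have "(of_nat (Suc k) :: 'a poly fract) = Fract (of_nat (Suc k)) 1" by (rule of_nat_fract)
  thus ?thesis using nz by (simp add: Fract_eq_0_iff del: of_nat_Suc)
qed

lemma const_unit_nat:
  "is_unit ([:of_nat (Suc k):] :: 'a::field_char_0 R)"
  using of_nat_Suc_fract_nz[of k] by (simp add: is_unit_const_poly_iff dvd_field_iff del: of_nat_Suc)

lemma smult_as_mult: "smult c p = [:c:] * p"
  by simp

context
  fixes p :: "'a::field_char_0 R"
  assumes p: "prime_elem p" and pd: "\<not> p dvd pderiv p"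
begin

lemma p_nz: "p \<noteq> 0" using p by auto

lemma pdvd_cancel_unit: "is_unit C \<Longrightarrow> p dvd C * Z \<Longrightarrow> p dvd Z"
  by (metis dvd_mult_unit_iff mult.commute)

lemma claim1_aux:
  assumes Y: "Y \<noteq> 0" "\<not> p dvd Y"
  shows "B0 \<noteq> 0 \<Longrightarrow> \<not> p dvd B0 \<Longrightarrow> Fract c p = Dy (Fract A (p ^ e * B0)) + Fract X Y \<Longrightarrow> p dvd c"
proof (induction e arbitrary: A)
  case 0
  have "Fract c p = Fract ((pderiv A * B0 - A * pderiv B0) * Y + X * (B0 * B0)) (B0 * B0 * Y)"
    using 0 Y by (simp add: Dy_Fract)
  hence "c * (B0 * B0 * Y) = ((pderiv A * B0 - A * pderiv B0) * Y + X * (B0 * B0)) * p"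
    using 0 Y p_nz by (simp add: eq_fract)
  hence "p dvd c * (B0 * B0 * Y)" by simp
  thus ?case using p 0 Y by (simp add: prime_elem_dvd_mult_iff)
next
  case (Suc k)
  show ?case
  proof (cases "p dvd A")
    case True
    then obtain A1 where A1: "A = p * A1" by (elim dvdE)
    have "Fract A (p ^ Suc k * B0) = Fract (p * A1) (p * (p ^ k * B0))" by (simp add: A1 algebra_simps)
    also have "\<dots> = Fract A1 (p ^ k * B0)" using p_nz by (rule mult_fract_cancel)
    finally show ?thesis using Suc by simp
  next
    case False
    define P where "P = p ^ k"
    define C where "C = [:of_nat (Suc k) :: 'a poly fract:]"
    define B where "B = P * p * B0"
    have P0: "P \<noteq> 0" using p_nz by (simp add: P_def)
    have B0': "B \<noteq> 0" using P0 p_nz Suc.prems by (simp add: B_def)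
    have Beq: "p ^ Suc k * B0 = B" by (simp add: B_def P_def algebra_simps)
    have dB: "pderiv B = P * p * pderiv B0 + B0 * (C * P * pderiv p)"
    proof -
      have "pderiv B = pderiv (p ^ Suc k * B0)" by (simp only: Beq)
      also have "\<dots> = p ^ Suc k * pderiv B0 + B0 * (smult (of_nat (Suc k)) (p ^ k) * pderiv p)"
        by (simp only: pderiv_mult pderiv_power_Suc)
      finally show ?thesis by (simp add: P_def C_def algebra_simps del: of_nat_Suc)
    qed
    define M where "M = p * pderiv A * B0 - A * p * pderiv B0 - C * (A * B0 * pderiv p)"
    have AB: "pderiv A * B - A * pderiv B = P * M"
      by (subst dB) (simp add: M_def B_def algebra_simps)
    have "Fract c p = Dy (Fract A B) + Fract X Y" using Suc.prems Beq by simp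
    also have "\<dots> = Fract ((pderiv A * B - A * pderiv B) * Y + X * (B * B)) (B * B * Y)"
      using B0' Y by (simp add: Dy_Fract)
    finally have "c * (B * B * Y) = ((pderiv A * B - A * pderiv B) * Y + X * (B * B)) * p"
      using B0' Y p_nz by (simp add: eq_fract)
    hence "c * (B * B * Y) = (P * M * Y + X * (B * B)) * p" by (simp only: AB)
    hence "(P * p) * (c * P * p * B0 * B0 * Y) = (P * p) * (M * Y + X * P * p * p * B0 * B0)"
      unfolding B_def by algebra
    moreover have PP: "P * p \<noteq> 0" using P0 p_nz by simp
    ultimately have "c * P * p * B0 * B0 * Y = M * Y + X * P * p * p * B0 * B0"
      using mult_left_cancel[OF PP] by blast
    hence "c * P * p * B0 * B0 * Y - X * P * p * p * B0 * B0 = M * Y" by (simp only: add_diff_cancel_right')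
    hence "M * Y = c * P * p * B0 * B0 * Y - X * P * p * p * B0 * B0" by (rule sym)
    also have "\<dots> = p * (c * P * B0 * B0 * Y - X * P * p * B0 * B0)" by (simp add: algebra_simps)
    finally have "M * Y = p * (c * P * B0 * B0 * Y - X * P * p * B0 * B0)" .
    hence "p dvd M * Y" by simp
    hence "p dvd M" using p Y by (simp add: prime_elem_dvd_mult_iff)
    moreover have "p dvd p * pderiv A * B0 - A * p * pderiv B0" by (simp add: algebra_simps)
    ultimately have "p dvd (p * pderiv A * B0 - A * p * pderiv B0) - M" by (rule dvd_diff[rotated])
    moreover have "(p * pderiv A * B0 - A * p * pderiv B0) - M = C * (A * B0 * pderiv p)"
      unfolding M_def by simp
    ultimately have "p dvd C * (A * B0 * pderiv p)" by simp
    hence "p dvd A * B0 * pderiv p" using const_unit_nat[of k] unfolding C_def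
      by (rule pdvd_cancel_unit[rotated])
    hence False using p False Suc.prems pd by (simp add: prime_elem_dvd_mult_iff)
    thus ?thesis ..
  qed
qed

lemma claim1:
  assumes "Fract c p \<in> Wx p" shows "p dvd c"
proof -
  from assms obtain H w where w: "w \<in> Ox p" "Fract c p = Dy H + w" unfolding Wx_def by blast
  from w(1) obtain X Y where Y: "Y \<noteq> 0" "\<not> p dvd Y" "w = Fract X Y" unfolding Ox_def by blast
  obtain A B where H: "H = Fract A B" "B \<noteq> 0" by (cases H)
  from decomp_prime[OF p H(2)] obtain e B0 where B: "B = p ^ e * B0" "\<not> p dvd B0" by blast
  have "B0 \<noteq> 0" using B H(2) by auto
  from claim1_aux[OF Y(1,2) this B(2)] show ?thesis using w Y H B by simp
qed

lemma exist_aux: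
  "B0 \<noteq> 0 \<Longrightarrow> \<not> p dvd B0 \<Longrightarrow> \<exists>c. Fract A (p ^ e * B0) - Fract c p \<in> Wx p"
proof (induction e arbitrary: A B0 rule: less_induct)
  case (less e)
  consider "e = 0" | "e = 1" | k where "e = Suc (Suc k)"
    by (metis One_nat_def not0_implies_Suc)
  then show ?case
  proof cases
    case 1
    have "Fract A (p ^ e * B0) - Fract 0 p = Fract A B0" using 1 by (simp add: Fract_0_left)
    moreover have "Fract A B0 \<in> Wx p" using less.prems p by (intro Ox_Wx Ox_Fract)
    ultimately show ?thesis by metis
  next
    case 2
    from bezout_prime[OF p less.prems(2)] obtain s t where st: "s * p + t * B0 = 1" by blast
    have "Fract A (p * B0) - Fract (A * t) p = Fract (A * p - A * t * (p * B0)) (p * B0 * p)"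
      using less.prems p_nz by simp
    also have "\<dots> = Fract (A * s) B0"
    proof -
      have "(A * p - A * t * (p * B0)) * B0 = A * s * (p * B0 * p)" using st by algebra
      thus ?thesis using less.prems p_nz by (simp add: eq_fract)
    qed
    finally have "Fract A (p ^ e * B0) - Fract (A * t) p = Fract (A * s) B0" using 2 by simp
    moreover have "Fract (A * s) B0 \<in> Wx p" using less.prems p by (intro Ox_Wx Ox_Fract)
    ultimately show ?thesis by metis
  next
    case 3
    have "\<not> p dvd pderiv p * B0" using p pd less.prems by (simp add: prime_elem_dvd_mult_iff)
    from bezout_prime[OF p this] obtain s t where st: "s * p + t * (pderiv p * B0) = 1" by blast
    define C where "C = [:of_nat (Suc k) :: 'a poly fract:]"
    define Ci where "Ci = [:inverse (of_nat (Suc k)) :: 'a poly fract:]"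
    have CCi: "C * Ci = 1"
    proof -
      have "(of_nat (Suc k) :: 'a poly fract) \<noteq> 0" by (rule of_nat_Suc_fract_nz)
      thus ?thesis by (simp add: C_def Ci_def del: of_nat_Suc)
    qed
    define w where "w = Ci * (A * t)"
    have Cw: "C * w = A * t" unfolding w_def by (simp add: mult.assoc[symmetric] CCi)
    define P where "P = p ^ k"
    define Q where "Q = P * p"
    define N where "N = A * s + pderiv w * B0"
    have P0: "P \<noteq> 0" using p_nz by (simp add: P_def)
    have Q0: "Q \<noteq> 0" using P0 p_nz by (simp add: Q_def)
    have dQ: "pderiv Q = C * P * pderiv p"
    proof -
      have "pderiv Q = pderiv (p ^ Suc k)" by (simp add: Q_def P_def algebra_simps)
      also have "\<dots> = smult (of_nat (Suc k)) (p ^ k) * pderiv p" by (rule pderiv_power_Suc)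
      finally show ?thesis by (simp add: P_def C_def del: of_nat_Suc)
    qed
    have lt: "Suc k < e" using 3 by simp
    from less.IH[OF lt less.prems(1,2), of N] obtain c where
      c: "Fract N (p ^ Suc k * B0) - Fract c p \<in> Wx p" by blast
    have key: "Fract A (p ^ e * B0) = Fract N (Q * B0) - Dy (Fract w Q)"
    proof -
      have "Fract N (Q * B0) - Dy (Fract w Q) =
            Fract (N * (Q * Q) - (pderiv w * Q - w * pderiv Q) * (Q * B0)) (Q * B0 * (Q * Q))"
        using Q0 less.prems by (simp add: Dy_Fract)
      also have "\<dots> = Fract A (Q * p * B0)"
      proof -
        have "A * (Q * B0 * (Q * Q)) = (N * (Q * Q) - (pderiv w * Q - w * pderiv Q) * (Q * B0)) * (Q * p * B0)"
          using st Cw unfolding dQ unfolding N_def Q_def by algebra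
        thus ?thesis using Q0 less.prems p_nz by (simp add: eq_fract)
      qed
      also have "Q * p * B0 = p ^ e * B0" using 3 by (simp add: Q_def P_def algebra_simps)
      finally show ?thesis by simp
    qed
    have "Fract A (p ^ e * B0) - Fract c p = (Fract N (p ^ Suc k * B0) - Fract c p) - Dy (Fract w Q)"
      using key by (simp add: Q_def P_def algebra_simps)
    moreover have "\<dots> \<in> Wx p" by (rule Wx_diff[OF p c Dy_Wx[OF p]])
    ultimately show ?thesis by metis
  qed
qed

lemma exist_res: "\<exists>c. u - Fract c p \<in> Wx p"
proof -
  obtain A B where H: "u = Fract A B" "B \<noteq> 0" by (cases u)
  from decomp_prime[OF p H(2)] obtain e B0 where B: "B = p ^ e * B0" "\<not> p dvd B0" by blast
  have "B0 \<noteq> 0" using B H(2) by auto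
  from exist_aux[OF this B(2)] show ?thesis using H B by simp
qed

end

lemma pderiv_not_dvd:
  fixes p :: "'a::field_char_0 R"
  assumes deg: "degree p > 0"
  shows "\<not> p dvd pderiv p"
proof
  assume dv: "p dvd pderiv p"
  obtain m where m: "degree p = Suc m" using deg by (cases "degree p") auto
  have "coeff (pderiv p) m = of_nat (Suc m) * lead_coeff p" by (simp add: coeff_pderiv m del: of_nat_Suc)
  moreover have "lead_coeff p \<noteq> 0" using deg by auto
  ultimately have "coeff (pderiv p) m \<noteq> 0" using of_nat_Suc_fract_nz[of m] by (simp del: of_nat_Suc)
  hence nz: "pderiv p \<noteq> 0" by auto
  have "degree (pderiv p) \<le> m"
    by (rule degree_le) (simp add: coeff_pderiv coeff_eq_0 m)
  moreover have "degree p \<le> degree (pderiv p)" by (rule dvd_imp_degree_le[OF dv nz])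
  ultimately show False using m by simp
qed

lemma exists_prime_factor:
  fixes f :: "'b::field poly"
  assumes "f \<noteq> 0" "degree f > 0"
  shows "\<exists>\<pi>. prime_elem \<pi> \<and> \<pi> dvd f"
  using assms
proof (induction "degree f" arbitrary: f rule: less_induct)
  case less
  show ?case
  proof (cases "irreducible f")
    case True
    hence "prime_elem f" by (rule field_poly_irreducible_imp_prime)
    thus ?thesis by (intro exI[of _ f]) simp
  next
    case False
    have nu: "\<not> is_unit f" using less.prems is_unit_iff_degree[of f] by simp
    have "\<exists>g h. f = g * h \<and> \<not> is_unit g \<and> \<not> is_unit h"
      using False less.prems(1) nu unfolding irreducible_def by simp
    then obtain g h where gh: "f = g * h" "\<not> is_unit g" "\<not> is_unit h" by blast
    have nz: "g \<noteq> 0" "h \<noteq> 0" using gh less.prems(1) by auto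
    have "degree h > 0" using gh(3) nz is_unit_iff_degree[of h] by simp
    moreover have dg: "degree g > 0" using gh(2) nz is_unit_iff_degree[of g] by simp
    moreover have "degree f = degree g + degree h" using gh nz by (simp add: degree_mult_eq)
    ultimately have "degree g < degree f" by simp
    from less.hyps[OF this nz(1) dg] obtain \<pi> where "prime_elem \<pi>" "\<pi> dvd g" by blast
    moreover have "g dvd f" using gh by simp
    ultimately show ?thesis by (blast intro: dvd_trans)
  qed
qed

lemma cdvd_iff:
  fixes A :: "'b::field poly poly"
  assumes "\<pi> \<noteq> 0"
  shows "[:\<pi>:] dvd A \<longleftrightarrow> (\<forall>j. \<pi> dvd coeff A j)"
proof
  assume "[:\<pi>:] dvd A"
  then obtain A' where "A = [:\<pi>:] * A'" by (elim dvdE)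
  thus "\<forall>j. \<pi> dvd coeff A j" by simp
next
  assume h: "\<forall>j. \<pi> dvd coeff A j"
  have "A = [:\<pi>:] * map_poly (\<lambda>c. c div \<pi>) A"
  proof (rule poly_eqI)
    fix j
    have "coeff A j = \<pi> * (coeff A j div \<pi>)" using h by simp
    thus "coeff A j = coeff ([:\<pi>:] * map_poly (\<lambda>c. c div \<pi>) A) j" by (simp add: coeff_map_poly)
  qed
  thus "[:\<pi>:] dvd A" by (rule dvdI)
qed

lemma gauss_step:
  fixes A B :: "'b::field poly poly"
  assumes pi: "prime_elem \<pi>" and h: "\<forall>j. \<pi> dvd coeff (A * B) j"
  shows "(\<forall>j. \<pi> dvd coeff A j) \<or> (\<forall>j. \<pi> dvd coeff B j)"
proof (rule ccontr)
  assume "\<not> ?thesis"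
  then obtain i0 j0 where "\<not> \<pi> dvd coeff A i0" "\<not> \<pi> dvd coeff B j0" by blast
  define i where "i = (LEAST i. \<not> \<pi> dvd coeff A i)"
  define j where "j = (LEAST j. \<not> \<pi> dvd coeff B j)"
  have i: "\<not> \<pi> dvd coeff A i" unfolding i_def by (rule LeastI) fact
  have j: "\<not> \<pi> dvd coeff B j" unfolding j_def by (rule LeastI) fact
  have ilt: "\<pi> dvd coeff A k" if "k < i" for k using not_less_Least[of k] that unfolding i_def by blast
  have jlt: "\<pi> dvd coeff B k" if "k < j" for k using not_less_Least[of k] that unfolding j_def by blast
  have "coeff (A * B) (i + j) = (\<Sum>k\<le>i + j. coeff A k * coeff B (i + j - k))" by (rule coeff_mult)
  also have "\<dots> = coeff A i * coeff B (i + j - i) + (\<Sum>k\<in>{..i + j} - {i}. coeff A k * coeff B (i + j - k))"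
    by (rule sum.remove) simp_all
  also have "i + j - i = j" by simp
  finally have eq: "coeff (A * B) (i + j) = coeff A i * coeff B j + (\<Sum>k\<in>{..i + j} - {i}. coeff A k * coeff B (i + j - k))" .
  have "\<pi> dvd (\<Sum>k\<in>{..i + j} - {i}. coeff A k * coeff B (i + j - k))"
  proof (rule dvd_sum)
    fix k assume k: "k \<in> {..i + j} - {i}"
    show "\<pi> dvd coeff A k * coeff B (i + j - k)"
    proof (cases "k < i")
      case True thus ?thesis using ilt by simp
    next
      case False
      hence "i + j - k < j" using k by auto
      thus ?thesis using jlt by simp
    qed
  qed
  moreover have "\<pi> dvd coeff (A * B) (i + j)" using h by blast
  ultimately have "\<pi> dvd coeff (A * B) (i + j) - (\<Sum>k\<in>{..i + j} - {i}. coeff A k * coeff B (i + j - k))"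
    by (rule dvd_diff[rotated])
  moreover have "coeff (A * B) (i + j) - (\<Sum>k\<in>{..i + j} - {i}. coeff A k * coeff B (i + j - k)) = coeff A i * coeff B j"
    by (subst eq) simp
  ultimately have "\<pi> dvd coeff A i * coeff B j" by simp
  thus False using pi i j by (simp add: prime_elem_dvd_mult_iff)
qed

lemma clear_denoms:
  fixes A :: "'b::idom fract poly"
  shows "\<exists>D A'. D \<noteq> 0 \<and> smult (to_fract D) A = map_poly to_fract A'"
proof (induction A)
  case 0 thus ?case by (intro exI[of _ 1] exI[of _ 0]) simp
next
  case (pCons r A)
  then obtain D A' where DA: "D \<noteq> 0" "smult (to_fract D) A = map_poly to_fract A'" by blast
  obtain a b where r: "r = Fract a b" "b \<noteq> 0" by (cases r)
  have "smult (to_fract (D * b)) (pCons r A) = map_poly to_fract (pCons (D * a) (smult b A'))"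
  proof -
    have "to_fract (D * b) * r = to_fract (D * a)" using r by (simp add: to_fract_def eq_fract)
    moreover have "smult (to_fract (D * b)) A = smult (to_fract b) (smult (to_fract D) A)"
      by (simp add: mult.commute)
    hence "smult (to_fract (D * b)) A = smult (to_fract b) (map_poly to_fract A')"
      using DA(2) by simp
    ultimately show ?thesis by (simp add: map_poly_pCons)
  qed
  thus ?case using DA r by (intro exI[of _ "D * b"]) auto
qed

definition primitive :: "'b::field poly poly \<Rightarrow> bool" where
  "primitive P \<longleftrightarrow> (\<forall>\<pi>. prime_elem \<pi> \<longrightarrow> \<not> (\<forall>j. \<pi> dvd coeff P j))"

lemma irred_primitive:
  fixes P :: "'b::field poly poly"
  assumes P: "irreducible P" "degree P > 0"
  shows "primitive P"
  unfolding primitive_def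
proof (intro allI impI notI)
  fix \<pi> :: "'b poly" assume pi: "prime_elem \<pi>" and h: "\<forall>j. \<pi> dvd coeff P j"
  have "\<pi> \<noteq> 0" using pi by auto
  with h obtain P' where P': "P = [:\<pi>:] * P'" using cdvd_iff[of \<pi> P] by (auto elim: dvdE)
  from P(1) P' have "is_unit [:\<pi>:] \<or> is_unit P'" by (simp add: irreducibleD)
  moreover have "\<not> is_unit [:\<pi>:]" using pi by (simp add: is_unit_const_poly_iff prime_elem_not_unit)
  moreover have "\<not> is_unit P'"
  proof
    assume "is_unit P'"
    hence "degree P' = 0" by (auto simp: is_unit_poly_iff)
    thus False using P' P(2) \<open>\<pi> \<noteq> 0\<close> by (simp add: degree_mult_eq)
  qed
  ultimately show False by blast
qed


lemma reduce_content:
  fixes P :: "'b::field poly poly"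
  shows "c \<noteq> 0 \<Longrightarrow> smult c P = A1 * B1 \<Longrightarrow> \<exists>A2 B2. P = A2 * B2 \<and> degree A2 = degree A1 \<and> degree B2 = degree B1"
proof (induction "degree c" arbitrary: c A1 B1 rule: less_induct)
  case less
  show ?case
  proof (cases "degree c = 0")
    case True
    then obtain c0 where c0: "c = [:c0:]" by (auto elim: degree_eq_zeroE)
    with less.prems have c0nz: "c0 \<noteq> 0" by auto
    have "smult [:inverse c0:] (smult c P) = P" using c0 c0nz by (simp add: one_pCons[symmetric])
    hence "P = smult [:inverse c0:] A1 * B1" using less.prems by simp
    moreover have "degree (smult [:inverse c0:] A1) = degree A1" using c0nz by simp
    ultimately show ?thesis by blast
  next
    case False
    from exists_prime_factor[OF less.prems(1)] False obtain \<pi> where pi: "prime_elem \<pi>" "\<pi> dvd c" by auto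
    then obtain c1 where c1: "c = \<pi> * c1" by (elim dvdE)
    have pinz: "\<pi> \<noteq> 0" using pi by auto
    have c1nz: "c1 \<noteq> 0" using c1 less.prems by auto
    have "degree c = degree \<pi> + degree c1" using c1 pinz c1nz by (simp add: degree_mult_eq)
    moreover have "degree \<pi> > 0" using prime_degree_pos[OF pi(1)] .
    ultimately have lt: "degree c1 < degree c" by simp
    have "\<forall>j. \<pi> dvd coeff (A1 * B1) j"
      using less.prems(2)[symmetric] c1 by simp
    from gauss_step[OF pi(1) this]
    have "[:\<pi>:] dvd A1 \<or> [:\<pi>:] dvd B1" using cdvd_iff[OF pinz] by blast
    thus ?thesis
    proof
      assume "[:\<pi>:] dvd A1"
      then obtain A3 where A3: "A1 = [:\<pi>:] * A3" by (elim dvdE)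
      have "smult \<pi> (smult c1 P) = smult \<pi> (A3 * B1)" using less.prems(2) A3 c1 by simp
      hence "smult c1 P = A3 * B1" by (rule smult_cancel[OF pinz])
      from less.hyps[OF lt c1nz this] obtain A2 B2 where
        "P = A2 * B2" "degree A2 = degree A3" "degree B2 = degree B1" by blast
      moreover have "degree A1 = degree A3" using A3 pinz by simp
      ultimately show ?thesis by metis
    next
      assume "[:\<pi>:] dvd B1"
      then obtain B3 where B3: "B1 = [:\<pi>:] * B3" by (elim dvdE)
      have "smult \<pi> (smult c1 P) = smult \<pi> (A1 * B3)" using less.prems(2) B3 c1 by (simp add: mult.left_commute)
      hence "smult c1 P = A1 * B3" by (rule smult_cancel[OF pinz])
      from less.hyps[OF lt c1nz this] obtain A2 B2 where
        "P = A2 * B2" "degree A2 = degree A1" "degree B2 = degree B3" by blast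
      moreover have "degree B1 = degree B3" using B3 pinz by simp
      ultimately show ?thesis by metis
    qed
  qed
qed

lemma emb_irreducible:
  fixes P :: "'b::field poly poly"
  assumes P: "irreducible P" "degree P > 0"
  shows "irreducible (map_poly to_fract P)"
proof (rule irreducibleI)
  have dg: "degree (map_poly to_fract P) = degree P" by (simp add: degree_map_poly)
  show nz: "map_poly to_fract P \<noteq> 0" using P by auto
  show "\<not> is_unit (map_poly to_fract P)" using dg P is_unit_iff_degree[OF nz] by simp
  fix A B assume AB: "map_poly to_fract P = A * B"
  have Anz: "A \<noteq> 0" "B \<noteq> 0" using AB nz by auto
  obtain D1 A1 where A1: "D1 \<noteq> 0" "smult (to_fract D1) A = map_poly to_fract A1" using clear_denoms by blast
  obtain D2 B1 where B1: "D2 \<noteq> 0" "smult (to_fract D2) B = map_poly to_fract B1" using clear_denoms by blast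
  have "map_poly to_fract (smult (D1 * D2) P) = smult (to_fract D1) A * smult (to_fract D2) B"
    using AB by (simp add: mult_ac)
  also have "\<dots> = map_poly to_fract (A1 * B1)" using A1 B1 by simp
  finally have eq: "smult (D1 * D2) P = A1 * B1" by (simp only: fract_poly_eq_iff)
  have dA: "degree A1 = degree A"
    using arg_cong[OF A1(2), of degree] A1(1) by (simp add: degree_map_poly)
  have dB: "degree B1 = degree B"
    using arg_cong[OF B1(2), of degree] B1(1) by (simp add: degree_map_poly)
  from reduce_content[OF _ eq] A1(1) B1(1) obtain A2 B2 where
    AB2: "P = A2 * B2" "degree A2 = degree A1" "degree B2 = degree B1" by auto
  from P(1) AB2(1) have "is_unit A2 \<or> is_unit B2" by (rule irreducibleD)
  hence "degree A = 0 \<or> degree B = 0" using AB2 dA dB by (auto simp: is_unit_poly_iff)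
  thus "is_unit A \<or> is_unit B" using Anz is_unit_iff_degree by metis
qed

lemma primitive_smult_const:
  fixes P Q :: "'b::field poly poly"
  assumes P: "primitive P" and Q: "primitive Q"
  shows "a \<noteq> 0 \<Longrightarrow> b \<noteq> 0 \<Longrightarrow> smult b Q = smult a P \<Longrightarrow> \<exists>c. c \<noteq> 0 \<and> Q = smult [:c:] P"
proof (induction "degree b" arbitrary: a b rule: less_induct)
  case less
  show ?case
  proof (cases "degree b = 0")
    case False
    from exists_prime_factor[OF less.prems(2)] False obtain \<pi> where pi: "prime_elem \<pi>" "\<pi> dvd b" by auto
    then obtain b1 where b1: "b = \<pi> * b1" by (elim dvdE)
    have pinz: "\<pi> \<noteq> 0" using pi by auto
    have b1nz: "b1 \<noteq> 0" using b1 less.prems by auto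
    have "\<forall>j. \<pi> dvd a * coeff P j"
    proof
      fix j
      have "coeff (smult b Q) j = coeff (smult a P) j" using less.prems(3) by simp
      hence "a * coeff P j = \<pi> * (b1 * coeff Q j)" using b1 by (simp add: mult.assoc)
      thus "\<pi> dvd a * coeff P j" by simp
    qed
    moreover from P pi(1) obtain j where "\<not> \<pi> dvd coeff P j" unfolding primitive_def by blast
    ultimately have "\<pi> dvd a" using pi(1) by (metis prime_elem_dvd_mult_iff)
    then obtain a1 where a1: "a = \<pi> * a1" by (elim dvdE)
    have a1nz: "a1 \<noteq> 0" using a1 less.prems by auto
    have "degree b = degree \<pi> + degree b1" using b1 pinz b1nz by (simp add: degree_mult_eq)
    moreover have "degree \<pi> > 0" using prime_degree_pos[OF pi(1)] .
    ultimately have lt: "degree b1 < degree b" by simp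
    have "smult \<pi> (smult b1 Q) = smult \<pi> (smult a1 P)" using less.prems(3) a1 b1 by simp
    hence "smult b1 Q = smult a1 P" by (rule smult_cancel[OF pinz])
    from less.hyps[OF lt a1nz b1nz this] show ?thesis .
  next
    case True
    then obtain b0 where b0: "b = [:b0:]" by (auto elim: degree_eq_zeroE)
    have b0nz: "b0 \<noteq> 0" using b0 less.prems by auto
    have "degree a = 0"
    proof (rule ccontr)
      assume "degree a \<noteq> 0"
      with exists_prime_factor[OF less.prems(1)] obtain \<pi> where pi: "prime_elem \<pi>" "\<pi> dvd a" by auto
      have "\<forall>j. \<pi> dvd b * coeff Q j"
      proof
        fix j
        have "coeff (smult b Q) j = coeff (smult a P) j" using less.prems(3) by simp
        thus "\<pi> dvd b * coeff Q j" using pi(2) by simp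
      qed
      moreover from Q pi(1) obtain j where "\<not> \<pi> dvd coeff Q j" unfolding primitive_def by blast
      ultimately have "\<pi> dvd b" using pi(1) by (metis prime_elem_dvd_mult_iff)
      hence "is_unit \<pi>" using b0 b0nz by (metis dvd_trans is_unit_const_poly_iff dvd_field_iff)
      thus False using pi(1) by (simp add: prime_elem_not_unit)
    qed
    then obtain a0 where a0: "a = [:a0:]" by (auto elim: degree_eq_zeroE)
    have a0nz: "a0 \<noteq> 0" using a0 less.prems by auto
    have "Q = smult [:inverse b0:] (smult b Q)" using b0 b0nz by (simp add: one_pCons[symmetric])
    also have "\<dots> = smult [:inverse b0 * a0:] P" using less.prems(3) a0 by (simp add: mult.commute)
    finally show ?thesis using a0nz b0nz by (intro exI[of _ "inverse b0 * a0"]) simp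
  qed
qed

lemma assoc_gauss:
  fixes P Q :: "'b::field poly poly"
  assumes P: "irreducible P" "degree P > 0" and Q: "irreducible Q" "degree Q > 0"
    and dv: "map_poly to_fract P dvd map_poly to_fract Q"
  shows "\<exists>c. c \<noteq> 0 \<and> Q = smult [:c:] P"
proof -
  from dv obtain A where A: "map_poly to_fract Q = map_poly to_fract P * A" by (elim dvdE)
  have iQ: "irreducible (map_poly to_fract Q)" by (rule emb_irreducible[OF Q])
  have iP: "irreducible (map_poly to_fract P)" by (rule emb_irreducible[OF P])
  from iQ A have "is_unit (map_poly to_fract P) \<or> is_unit A" by (rule irreducibleD)
  with iP have "is_unit A" by (auto simp: irreducible_def)
  then obtain r where r0: "A = [:r:]" "r dvd 1" by (auto simp: is_unit_poly_iff)
  have "r \<noteq> 0" using r0(2) by (metis dvd_0_left_iff zero_neq_one)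
  hence r: "A = [:r:]" "r \<noteq> 0" using r0 by auto
  obtain a b where ab: "r = Fract a b" "b \<noteq> 0" by (cases r)
  have anz: "a \<noteq> 0" using ab r by (auto simp: Fract_0_left)
  have "to_fract b * r = to_fract a" using ab by (simp add: to_fract_def eq_fract)
  hence "map_poly to_fract (smult b Q) = map_poly to_fract (smult a P)"
    using A r by (simp add: mult.commute)
  hence "smult b Q = smult a P" by (simp only: fract_poly_eq_iff)
  from primitive_smult_const[OF irred_primitive[OF P] irred_primitive[OF Q] anz ab(2) this]
  show ?thesis .
qed


lemma powi_not_one:
  fixes q :: "'a::field_char_0"
  assumes q: "q \<noteq> 0" and nr: "\<forall>n::nat. n > 0 \<longrightarrow> q ^ n \<noteq> 1" and K: "K \<noteq> 0"
  shows "q powi K \<noteq> 1"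
proof
  assume h: "q powi K = 1"
  show False
  proof (cases "K > 0")
    case True
    hence "q powi K = q ^ nat K" by (metis int_nat_eq power_int_of_nat less_le)
    with h nr True show False by simp
  next
    case False
    with K have "K < 0" by simp
    hence "q powi K = inverse (q ^ nat (- K))"
      by (metis minus_minus nat_0_le neg_0_le_iff_le power_int_minus power_int_of_nat less_le)
    with h have "q ^ nat (- K) = 1" by (metis inverse_1 inverse_inverse_eq)
    with nr \<open>K < 0\<close> show False by simp
  qed
qed

lemma powi_pow_inj:
  fixes q :: "'a::field_char_0"
  assumes q: "q \<noteq> 0" and nr: "\<forall>n::nat. n > 0 \<longrightarrow> q ^ n \<noteq> 1" and N: "N \<noteq> 0"
    and eq: "(q powi N) ^ i1 = (q powi N) ^ i2"
  shows "i1 = i2"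
proof (rule ccontr)
  assume ne: "i1 \<noteq> i2"
  have e: "(q powi N) ^ i = q powi (N * int i)" for i by (simp add: power_int_mult)
  have "q powi (N * int i1 - N * int i2) = q powi (N * int i1) / q powi (N * int i2)"
    using q by (simp add: power_int_diff)
  also have "\<dots> = 1" using eq q by (simp add: e[symmetric])
  finally have "q powi (N * int i1 - N * int i2) = 1" .
  moreover have "N * int i1 - N * int i2 \<noteq> 0" using N ne by (simp add: right_diff_distrib[symmetric])
  ultimately show False using powi_not_one[OF q nr] by blast
qed

lemma shift_invariant_const:
  fixes f :: "'a::field_char_0 poly"
  assumes N: "N \<noteq> 0" and inv: "pcompose f [:of_int N, 1:] = f"
  shows "degree f = 0"
proof -
  have step: "poly f (of_int N + x) = poly f x" for x
    using arg_cong[OF inv, of "\<lambda>g. poly g x"] by (simp add: poly_pcompose)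
  have it: "poly f (of_int (N * int k)) = poly f 0" for k
  proof (induction k)
    case 0 thus ?case by simp
  next
    case (Suc k)
    have "of_int (N * int (Suc k)) = of_int N + (of_int (N * int k) :: 'a)" by (simp add: algebra_simps)
    thus ?case using step Suc by simp
  qed
  define g where "g = f - [:poly f 0:]"
  have "range (\<lambda>k. of_int (N * int k) :: 'a) \<subseteq> {x. poly g x = 0}"
    using it by (auto simp: g_def)
  moreover have "infinite (range (\<lambda>k. of_int (N * int k) :: 'a))"
    by (rule range_inj_infinite) (use N in \<open>auto simp: inj_def\<close>)
  ultimately have "\<not> finite {x. poly g x = 0}" using finite_subset by blast
  hence "g = 0" using poly_roots_finite by blast
  hence "f = [:poly f 0:]" by (simp add: g_def)
  thus ?thesis by (metis degree_pCons_0)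
qed

lemma periodic_const:
  fixes d :: "'a::field_char_0 poly poly"
  assumes q: "q \<noteq> 0" and nr: "\<forall>n::nat. n > 0 \<longrightarrow> q ^ n \<noteq> 1"
    and irr: "irreducible d" and dg: "degree d > 0" and N: "N \<noteq> 0"
    and per: "phi_pow_xy kd q N d = smult [:c:] d"
  shows "\<forall>j. degree (coeff d j) = 0"
proof -
  have cf: "pcompose (coeff d j) (xsub kd q N) = smult c (coeff d j)" for j
    using arg_cong[OF per, of "\<lambda>P. coeff P j"] by (simp add: phi_pow_coeff[OF q])
  have dnz: "d \<noteq> 0" using irr by auto
  define j0 where "j0 = degree d"
  have f0: "coeff d j0 \<noteq> 0" using dnz by (simp add: j0_def)
  show ?thesis
  proof (cases kd)
    case Shift
    hence xs: "xsub kd q N = [:of_int N, 1:]" by (simp add: xsub_def)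
    have "lead_coeff (pcompose (coeff d j0) (xsub kd q N)) = lead_coeff (coeff d j0)"
      by (simp add: xs lead_coeff_comp)
    also have "lead_coeff (pcompose (coeff d j0) (xsub kd q N)) = c * lead_coeff (coeff d j0)"
      by (simp add: cf)
    finally have "c = 1" using f0 by simp
    thus ?thesis using cf xs N by (auto intro: shift_invariant_const)
  next
    case QShift
    define a where "a = q powi N"
    hence xs: "xsub kd q N = [:0, a:]" using QShift by (simp add: xsub_def)
    have ceq: "a ^ i * coeff (coeff d j) i = c * coeff (coeff d j) i" for i j
      using arg_cong[OF cf[of j], of "\<lambda>g. coeff g i"] by (simp add: xs coeff_pcompose_linear)
    define i0 where "i0 = degree (coeff d j0)"
    have nz0: "coeff (coeff d j0) i0 \<noteq> 0" using f0 by (simp add: i0_def)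
    have ac: "a ^ i0 = c" using ceq[of i0 j0] nz0 by simp
    have only: "i = i0" if "coeff (coeff d j) i \<noteq> 0" for i j
    proof -
      have "a ^ i = c" using ceq[of i j] that by simp
      hence "(q powi N) ^ i = (q powi N) ^ i0" using ac by (simp add: a_def)
      thus ?thesis by (rule powi_pow_inj[OF q nr N])
    qed
    show ?thesis
    proof (cases "i0 = 0")
      case True
      show ?thesis
      proof
        fix j
        have "degree (coeff d j) \<le> 0"
          by (rule degree_le) (use only True in \<open>auto\<close>)
        thus "degree (coeff d j) = 0" by simp
      qed
    next
      case False
      define e where "e = map_poly (\<lambda>f. [:coeff f i0:]) d"
      have deq: "d = [:monom 1 i0:] * e"
      proof (rule poly_eqI)
        fix j
        have "coeff d j = monom (coeff (coeff d j) i0) i0"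
        proof (rule poly_eqI)
          fix i show "coeff (coeff d j) i = coeff (monom (coeff (coeff d j) i0) i0) i"
            using only[of j i] by (cases "i = i0") (auto simp: coeff_monom)
        qed
        thus "coeff d j = coeff ([:monom 1 i0:] * e) j"
          by (simp add: e_def coeff_map_poly smult_monom)
      qed
      from irreducibleD[OF irr this] have "is_unit [:monom (1::'a) i0:] \<or> is_unit e" .
      moreover have "\<not> is_unit [:monom (1::'a) i0:]"
      proof
        assume "is_unit [:monom (1::'a) i0:]"
        hence "is_unit (monom (1::'a) i0)" by (simp add: is_unit_const_poly_iff)
        hence "degree (monom (1::'a) i0) = 0" by (auto simp: is_unit_poly_iff)
        thus False using False by (simp add: degree_monom_eq)
      qed
      moreover have "\<not> is_unit e"
      proof
        assume "is_unit e"
        hence "degree e = 0" by (auto simp: is_unit_poly_iff)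
        moreover have "degree e = degree d"
        proof -
          have "e \<noteq> 0" using deq dnz by auto
          moreover have "[:monom (1::'a) i0:] \<noteq> 0" by simp
          ultimately show ?thesis using deq by (simp add: degree_mult_eq)
        qed
        ultimately show False using dg by simp
      qed
      ultimately show ?thesis by blast
    qed
  qed
qed


lemma prime_not_dvd_prod:
  fixes pp :: "int \<Rightarrow> 'b::field poly"
  assumes pr: "\<And>n. prime_elem (pp n)" and inj: "\<And>n n'. pp n dvd pp n' \<Longrightarrow> n = n'"
  shows "finite F \<Longrightarrow> x \<notin> F \<Longrightarrow> \<not> pp x dvd prod pp F"
proof (induction F rule: finite_induct)
  case empty thus ?case using pr[of x] by (simp add: prime_elem_not_unit)
next
  case (insert y F)
  have "x \<noteq> y" using insert by auto
  hence "\<not> pp x dvd pp y" using inj by blast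
  moreover have "\<not> pp x dvd prod pp F" using insert by auto
  ultimately show ?case using insert pr[of x] by (simp add: prime_elem_dvd_mult_iff)
qed

lemma prod_dvd_B:
  fixes pp :: "int \<Rightarrow> 'b::field poly"
  assumes pr: "\<And>n. prime_elem (pp n)" and inj: "\<And>n n'. pp n dvd pp n' \<Longrightarrow> n = n'"
  shows "finite F \<Longrightarrow> F \<subseteq> {n. pp n dvd B} \<Longrightarrow> prod pp F dvd B"
proof (induction F rule: finite_induct)
  case empty thus ?case by simp
next
  case (insert x F)
  from insert have "prod pp F dvd B" by auto
  then obtain X where X: "B = prod pp F * X" by (elim dvdE)
  have "pp x dvd B" using insert by auto
  moreover have "\<not> pp x dvd prod pp F" using prime_not_dvd_prod[OF pr inj insert(1,2)] .
  ultimately have "pp x dvd X" using X pr[of x] by (simp add: prime_elem_dvd_mult_iff)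
  then obtain X' where "X = pp x * X'" by (elim dvdE)
  hence "B = prod pp (insert x F) * X'" using X insert by (simp add: mult_ac)
  thus ?case by simp
qed

lemma finite_prime_divisors:
  fixes pp :: "int \<Rightarrow> 'b::field poly"
  assumes B: "B \<noteq> 0" and pr: "\<And>n. prime_elem (pp n)" and inj: "\<And>n n'. pp n dvd pp n' \<Longrightarrow> n = n'"
  shows "finite {n. pp n dvd B}"
proof (rule ccontr)
  assume "infinite {n. pp n dvd B}"
  from infinite_arbitrarily_large[OF this, of "Suc (degree B)"]
  obtain F where F: "finite F" "card F = Suc (degree B)" "F \<subseteq> {n. pp n dvd B}" by blast
  have dv: "prod pp F dvd B" by (rule prod_dvd_B[OF pr inj F(1,3)])
  have nz: "\<And>n. pp n \<noteq> 0" using pr by (simp add: prime_elem_def)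
  have "card F \<le> (\<Sum>n\<in>F. degree (pp n))"
  proof -
    have "(\<Sum>n\<in>F. 1) \<le> (\<Sum>n\<in>F. degree (pp n))"
      by (rule sum_mono) (use prime_degree_pos[OF pr] in \<open>auto simp: Suc_le_eq\<close>)
    thus ?thesis by simp
  qed
  also have "\<dots> = degree (prod pp F)" using nz by (simp add: degree_prod_sum_eq)
  also have "\<dots> \<le> degree B" using dv B by (rule dvd_imp_degree_le)
  finally show False using F(2) by simp
qed

lemma Fract_diff_same:
  fixes p :: "'b::idom"
  assumes "p \<noteq> 0"
  shows "Fract x p - Fract y p = Fract (x - y) p"
  using assms by (simp add: Fract_conv_to_fract diff_divide_distrib)


context
  fixes kd :: op_kind and q :: "'a::field_char_0"
  assumes q: "q \<noteq> 0"
begin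

lemma phi_pow_smult_const: "phi_pow_xy kd q n (smult [:c:] P) = smult [:c:] (phi_pow_xy kd q n P)"
  by (rule poly_eqI) (simp add: phi_pow_coeff[OF q] pcompose_smult)

lemma phi_pow_const_coeffs:
  assumes "\<forall>j. degree (coeff d j) = 0"
  shows "phi_pow_xy kd q n d = d"
proof (rule poly_eqI)
  fix j
  from assms obtain a where "coeff d j = [:a:]" by (metis degree_eq_zeroE)
  thus "coeff (phi_pow_xy kd q n d) j = coeff d j" by (simp add: phi_pow_coeff[OF q])
qed

end

lemma lin1: "(x::'b::ab_group_add) + y = z + w \<Longrightarrow> z - x = y - w"
  by (simp add: algebra_simps)

lemma lin2: "(f::'b::ab_group_add) = P - C - A \<Longrightarrow> f = (u - g - A) - (u - P) + (g - C)"
  by (simp add: algebra_simps)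

lemma lin3: "(c::'b::comm_ring) = t * p + c0 \<Longrightarrow> pc = pt * p + pc0 \<Longrightarrow>
    pc0 - c0 - a = (pc - c - a) - p * (pt - t)"
  by (simp add: algebra_simps)

lemma main_dir:
  fixes kd :: op_kind and q :: "'a::field_char_0"
    and G H :: "'a poly fract poly fract"
    and m :: nat and a :: "nat \<Rightarrow> 'a poly fract poly" and d :: "nat \<Rightarrow> 'a poly poly"
  assumes q: "q \<noteq> 0" and nr: "\<forall>n::nat. n > 0 \<longrightarrow> q ^ n \<noteq> 1"
    and hyp: "\<forall>i\<in>{1..m}. a i \<noteq> 0 \<and> irreducible (d i) \<and> degree (a i) < degree (d i)"
    and orb: "\<forall>i\<in>{1..m}. \<forall>j\<in>{1..m}. i \<noteq> j \<longrightarrow> \<not> same_orbit kd q (d i) (d j)"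
    and SG: "(\<Sum>i=1..m. Fract (a i) (emb_xy (d i))) = phi_xy kd q G - G + Dy H"
    and i: "i \<in> {1..m}"
  shows "(\<forall>j. degree (coeff (d i) j) = 0) \<and> (\<exists>b. a i = phi_y kd q b - b)"
proof -
  define pp where "pp n = emb_xy (phi_pow_xy kd q n (d i))" for n
  define T where "T j = Fract (a j) (emb_xy (d j))" for j
  have ai: "a i \<noteq> 0" and irr: "irreducible (d i)" and dga: "degree (a i) < degree (d i)"
    using hyp i by auto
  have dg: "degree (d i) > 0" using dga by linarith
  have ppirr: "irreducible (phi_pow_xy kd q n (d i))" for n by (rule irreducible_phi_pow[OF q irr])
  have dgn: "degree (phi_pow_xy kd q n (d i)) > 0" for n using dg by (simp add: degree_phi_pow[OF q])
  have ppprime: "prime_elem (pp n)" for n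
    unfolding pp_def by (rule field_poly_irreducible_imp_prime[OF emb_irreducible[OF ppirr dgn]])
  have ppdeg: "degree (pp n) = degree (d i)" for n
    unfolding pp_def by (simp add: degree_map_poly degree_phi_pow[OF q])
  have ppder: "\<not> pp n dvd pderiv (pp n)" for n using ppdeg dg by (intro pderiv_not_dvd) simp
  have pp0: "pp 0 = emb_xy (d i)" unfolding pp_def using q by simp
  have other: "\<not> pp n dvd emb_xy (d j)" if j: "j \<in> {1..m}" "j \<noteq> i" for j n
  proof
    assume dv: "pp n dvd emb_xy (d j)"
    have irrj: "irreducible (d j)" and dgaj: "degree (a j) < degree (d j)" using hyp j by auto
    hence dgj: "degree (d j) > 0" by linarith
    from assoc_gauss[OF ppirr dgn irrj dgj dv[unfolded pp_def]]
    obtain c where c: "c \<noteq> 0" "d j = smult [:c:] (phi_pow_xy kd q n (d i))" by blast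
    have "same_orbit kd q (d i) (d j)" unfolding same_orbit_def
      by (rule exI[of _ n], rule exI[of _ c]) (use c in simp)
    moreover have "\<not> same_orbit kd q (d i) (d j)" using orb i j by simp
    ultimately show False by contradiction
  qed
  have Srest: "(\<Sum>j\<in>{1..m}-{i}. T j) \<in> Ox (pp n)" for n
  proof (rule Ox_sum[OF ppprime])
    fix j assume j: "j \<in> {1..m} - {i}"
    have "irreducible (d j)" using hyp j by auto
    hence "d j \<noteq> 0" by (simp add: irreducible_def)
    thus "T j \<in> Ox (pp n)" unfolding T_def using other[of j n] j by (intro Ox_Fract) auto
  qed
  have Ssplit: "(\<Sum>j=1..m. T j) = T i + (\<Sum>j\<in>{1..m}-{i}. T j)"
    by (rule sum.remove) (use i in auto)
  have E: "phi_xy kd q G - G - T i \<in> Wx (pp n)" for n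
  proof -
    have X: "T i + (\<Sum>j\<in>{1..m}-{i}. T j) = phi_xy kd q G - G + Dy H"
      using SG Ssplit unfolding T_def by simp
    have "phi_xy kd q G - G - T i = (\<Sum>j\<in>{1..m}-{i}. T j) - Dy H"
      using X by (rule lin1)
    also have "\<dots> \<in> Wx (pp n)"
      by (rule Wx_diff[OF ppprime Ox_Wx[OF ppprime Srest] Dy_Wx[OF ppprime]])
    finally show ?thesis .
  qed
  have push: "(phi_xy kd q ^^ j) u \<in> Wx (pp (int K))" if "u \<in> Wx (pp (int K - int j))" for u j K
  proof -
    have "(phi_xy kd q ^^ j) u \<in> Wx (phy kd q (int j) (pp (int K - int j)))"
      by (rule Wx_phi_iter[OF q that])
    also have "phy kd q (int j) (pp (int K - int j)) = pp (int K)"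
      unfolding pp_def by (simp add: phy_emb[OF q] phi_pow_comp[OF q])
    finally show ?thesis .
  qed
  have const: "\<forall>j. degree (coeff (d i) j) = 0"
  proof (rule ccontr)
    assume nc: "\<not> (\<forall>j. degree (coeff (d i) j) = 0)"
    have inj: "n = n'" if dv: "pp n dvd pp n'" for n n'
    proof (rule ccontr)
      assume ne: "n \<noteq> n'"
      from assoc_gauss[OF ppirr[of n] dgn[of n] ppirr[of n'] dgn[of n'] dv[unfolded pp_def]]
      obtain c where c: "c \<noteq> 0" "phi_pow_xy kd q n' (d i) = smult [:c:] (phi_pow_xy kd q n (d i))" by blast
      hence "phi_pow_xy kd q (-n) (phi_pow_xy kd q n' (d i)) = phi_pow_xy kd q (-n) (smult [:c:] (phi_pow_xy kd q n (d i)))"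
        by simp
      hence "phi_pow_xy kd q (n' + - n) (d i) = smult [:c:] (d i)"
        by (simp only: phi_pow_comp[OF q] phi_pow_smult_const[OF q] phi_pow_inv[OF q]
              add.right_inverse phi_pow_zero[OF q])
      moreover have "n' + - n \<noteq> 0" using ne by simp
      ultimately have "\<forall>j. degree (coeff (d i) j) = 0"
        using periodic_const[OF q nr irr dg] by blast
      with nc show False by blast
    qed
    obtain A B where G: "G = Fract A B" "B \<noteq> 0" by (cases G)
    have fin: "finite {n. pp n dvd B}" by (rule finite_prime_divisors[OF G(2) ppprime inj])
    then obtain K0 where K0: "abs ` {n. pp n dvd B} \<subseteq> {..<K0}" using finite_int_iff_bounded by blast
    define K where "K = nat K0"
    have GW: "G \<in> Wx (pp n)" if "abs n \<ge> int K" for n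
    proof -
      have "\<not> pp n dvd B"
      proof
        assume "pp n dvd B"
        hence "abs n < K0" using K0 by auto
        thus False using that unfolding K_def by linarith
      qed
      thus ?thesis using G ppprime[of n] by (auto intro!: Ox_Wx Ox_Fract)
    qed
    have TiO: "T i \<in> Ox (pp n)" if "n \<noteq> 0" for n
    proof -
      have "\<not> pp n dvd pp 0" using inj that by blast
      moreover have "emb_xy (d i) \<noteq> 0" using irr by auto
      ultimately show ?thesis unfolding T_def using pp0 by (intro Ox_Fract) auto
    qed
    define U where "U j = (phi_xy kd q ^^ Suc j) G - (phi_xy kd q ^^ j) G" for j
    have Uj: "(phi_xy kd q ^^ j) (phi_xy kd q G - G) = U j" for j
      unfolding U_def by (simp add: phi_iter_diff[OF q] funpow_swap1)
    have terms: "U j - (if j = K then (phi_xy kd q ^^ K) (T i) else 0) \<in> Wx (pp (int K))" for j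
    proof (cases "j = K")
      case True
      have "(phi_xy kd q ^^ j) (phi_xy kd q G - G - T i) \<in> Wx (pp (int K))"
        by (rule push) (use E True in simp)
      moreover have "(phi_xy kd q ^^ j) (phi_xy kd q G - G - T i) = U j - (phi_xy kd q ^^ j) (T i)"
        using phi_iter_diff[OF q, where j=j and x="phi_xy kd q G - G" and y="T i"] Uj[of j] by simp
      ultimately show ?thesis using True by simp
    next
      case False
      have "phi_xy kd q G - G = (phi_xy kd q G - G - T i) + T i" by simp
      also have "\<dots> \<in> Wx (pp (int K - int j))"
        using False by (intro Wx_add[OF ppprime] E Ox_Wx[OF ppprime] TiO) simp
      finally have "(phi_xy kd q ^^ j) (phi_xy kd q G - G) \<in> Wx (pp (int K))" by (rule push)
      thus ?thesis using False by (simp add: Uj)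
    qed
    have "(\<Sum>j<Suc (2 * K). U j - (if j = K then (phi_xy kd q ^^ K) (T i) else 0)) \<in> Wx (pp (int K))"
      by (rule Wx_sum[OF ppprime]) (rule terms)
    moreover have "(\<Sum>j<Suc (2 * K). U j - (if j = K then (phi_xy kd q ^^ K) (T i) else 0))
        = ((phi_xy kd q ^^ Suc (2 * K)) G - G) - (phi_xy kd q ^^ K) (T i)"
    proof -
      have "(\<Sum>j<Suc (2 * K). U j) = (phi_xy kd q ^^ Suc (2 * K)) G - (phi_xy kd q ^^ 0) G"
        unfolding U_def by (rule sum_lessThan_telescope)
      moreover have "(\<Sum>j<Suc (2 * K). (if j = K then (phi_xy kd q ^^ K) (T i) else 0)) = (phi_xy kd q ^^ K) (T i)"
        by (simp add: sum.delta)
      ultimately show ?thesis by (simp add: sum_subtractf)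
    qed
    ultimately have W1: "((phi_xy kd q ^^ Suc (2 * K)) G - G) - (phi_xy kd q ^^ K) (T i) \<in> Wx (pp (int K))"
      by simp
    have W2: "G \<in> Wx (pp (int K))" by (rule GW) simp
    have W3: "(phi_xy kd q ^^ Suc (2 * K)) G \<in> Wx (pp (int K))"
      by (rule push, rule GW) simp
    have "(phi_xy kd q ^^ K) (T i) = ((phi_xy kd q ^^ Suc (2 * K)) G - G) - (((phi_xy kd q ^^ Suc (2 * K)) G - G) - (phi_xy kd q ^^ K) (T i))"
      by simp
    also have "\<dots> \<in> Wx (pp (int K))"
      by (intro Wx_diff[OF ppprime] W1 W2 W3)
    finally have TW: "(phi_xy kd q ^^ K) (T i) \<in> Wx (pp (int K))" .
    have "emb_xy (d i) \<noteq> 0" using irr by auto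
    hence "(phi_xy kd q ^^ K) (T i) = Fract (phy kd q (int K) (a i)) (pp (int K))"
      unfolding T_def pp_def by (simp add: phi_iter_Fract[OF q] phy_emb[OF q])
    with TW have "pp (int K) dvd phy kd q (int K) (a i)" using claim1[OF ppprime ppder] by simp
    moreover have "phy kd q (int K) (a i) \<noteq> 0" using ai q by simp
    ultimately have "degree (pp (int K)) \<le> degree (phy kd q (int K) (a i))" by (rule dvd_imp_degree_le)
    thus False using dga ppdeg[of "int K"] by (simp add: degree_phy[OF q])
  qed
  define p where "p = emb_xy (d i)"
  have pnz: "p \<noteq> 0" using irr by (auto simp: p_def)
  have phyp: "phy kd q 1 p = p"
    unfolding p_def by (simp add: phy_emb[OF q] phi_pow_const_coeffs[OF q const])
  have pprime: "prime_elem p" and pder: "\<not> p dvd pderiv p" using ppprime[of 0] ppder[of 0] pp0 by (simp_all add: p_def)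
  obtain c where c: "G - Fract c p \<in> Wx p" using exist_res[OF pprime pder] by blast
  have "(phi_xy kd q ^^ 1) (G - Fract c p) \<in> Wx (phy kd q (int 1) p)" by (rule Wx_phi_iter[OF q c])
  hence c2: "phi_xy kd q G - Fract (phy kd q 1 c) p \<in> Wx p"
    using pnz phyp by (simp add: phi_xy_diff[OF q] phi_xy_Fract[OF q])
  have E0: "phi_xy kd q G - G - Fract (a i) p \<in> Wx p" using E[of 0] pp0 by (simp add: T_def p_def)
  have "Fract (phy kd q 1 c - c - a i) p = (phi_xy kd q G - G - Fract (a i) p) - (phi_xy kd q G - Fract (phy kd q 1 c) p) + (G - Fract c p)"
  proof -
    have "Fract (phy kd q 1 c - c - a i) p = Fract (phy kd q 1 c) p - Fract c p - Fract (a i) p"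
      using pnz by (simp add: Fract_conv_to_fract diff_divide_distrib)
    thus ?thesis by (rule lin2)
  qed
  also have "\<dots> \<in> Wx p" by (intro Wx_add[OF pprime] Wx_diff[OF pprime] E0 c2 c)
  finally have "p dvd phy kd q 1 c - c - a i" by (rule claim1[OF pprime pder])
  define c0 where "c0 = c mod p"
  define t where "t = c div p"
  have eqc: "c = t * p + c0" unfolding c0_def t_def by simp
  have eqpc: "phy kd q 1 c = phy kd q 1 t * p + phy kd q 1 c0"
    by (subst eqc) (simp add: phy_add[OF q] phy_mult[OF q] phyp)
  have "phy kd q 1 c0 - c0 - a i = (phy kd q 1 c - c - a i) - p * (phy kd q 1 t - t)"
    using eqc eqpc by (rule lin3)
  also have "p dvd \<dots>" using \<open>p dvd phy kd q 1 c - c - a i\<close> by (simp add: dvd_diff)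
  finally have dvz: "p dvd phy kd q 1 c0 - c0 - a i" .
  have dp: "degree p = degree (d i)" by (simp add: p_def degree_map_poly)
  have dc0: "degree c0 < degree p"
    using degree_mod_less[OF pnz, of c] dg dp unfolding c0_def by auto
  have "degree (phy kd q 1 c0 - c0 - a i) < degree p"
    using dc0 dga dp by (intro degree_diff_less) (simp_all add: degree_phy[OF q])
  hence "phy kd q 1 c0 - c0 - a i = 0" using dvz dvd_imp_degree_le[OF dvz] by fastforce
  hence "a i = phi_y kd q c0 - c0" by (simp add: phi_y_phy)
  thus ?thesis using const by blast
qed


lemma conv_dir:
  fixes kd :: op_kind and q :: "'a::field_char_0"
    and m :: nat and a :: "nat \<Rightarrow> 'a poly fract poly" and d :: "nat \<Rightarrow> 'a poly poly"
  assumes q: "q \<noteq> 0"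
    and nz: "\<forall>i\<in>{1..m}. d i \<noteq> 0"
    and c: "\<forall>i\<in>{1..m}. (\<forall>j. degree (coeff (d i) j) = 0) \<and> (\<exists>b. a i = phi_y kd q b - b)"
  shows "\<exists>G. (\<Sum>i=1..m. Fract (a i) (emb_xy (d i))) = phi_xy kd q G - G"
proof -
  from c obtain bf where bf: "\<forall>i\<in>{1..m}. a i = phi_y kd q (bf i) - bf i" by metis
  define G where "G = (\<Sum>i=1..m. Fract (bf i) (emb_xy (d i)))"
  have "phi_xy kd q G - G = (\<Sum>i=1..m. phi_xy kd q (Fract (bf i) (emb_xy (d i))) - Fract (bf i) (emb_xy (d i)))"
    unfolding G_def by (simp add: phi_xy_sum[OF q] sum_subtractf)
  also have "\<dots> = (\<Sum>i=1..m. Fract (a i) (emb_xy (d i)))"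
  proof (rule sum.cong[OF refl])
    fix i assume i: "i \<in> {1..m}"
    have e0: "emb_xy (d i) \<noteq> 0" using nz i by simp
    have pe: "phy kd q 1 (emb_xy (d i)) = emb_xy (d i)"
      using c i by (simp add: phy_emb[OF q] phi_pow_const_coeffs[OF q])
    have "phi_xy kd q (Fract (bf i) (emb_xy (d i))) - Fract (bf i) (emb_xy (d i))
        = Fract (phy kd q 1 (bf i)) (emb_xy (d i)) - Fract (bf i) (emb_xy (d i))"
      using e0 pe by (simp add: phi_xy_Fract[OF q])
    also have "\<dots> = Fract (phy kd q 1 (bf i) - bf i) (emb_xy (d i))" by (rule Fract_diff_same[OF e0])
    also have "\<dots> = Fract (a i) (emb_xy (d i))" using bf i by (simp add: phi_y_phy)
    finally show "phi_xy kd q (Fract (bf i) (emb_xy (d i))) - Fract (bf i) (emb_xy (d i)) = Fract (a i) (emb_xy (d i))" .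
  qed
  finally show ?thesis by metis
qed

lemma lin4: "(f::'b::ab_group_add) = pg - g + dh + S \<Longrightarrow> f = pg' - g' + dh' \<Longrightarrow> S = (pg' - pg) - (g' - g) + (dh' - dh)"
  by (simp add: algebra_simps)

lemma lin5: "(f::'b::ab_group_add) = pg - g + dh + S \<Longrightarrow> S = pG - G \<Longrightarrow> f = (pg + pG) - (g + G) + dh"
  by (simp add: algebra_simps)

theorem theorem2:
  fixes kd :: op_kind and q :: "'a::field_char_0"
    and f g h :: "'a poly fract poly fract"
    and m :: nat and a :: "nat \<Rightarrow> 'a poly fract poly" and d :: "nat \<Rightarrow> 'a poly poly"
  assumes "q \<noteq> 0" and "\<forall>n::nat. n > 0 \<longrightarrow> q ^ n \<noteq> 1"
    and "f = phi_xy kd q g - g + Dy h + (\<Sum>i=1..m. Fract (a i) (emb_xy (d i)))"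
    and "\<forall>i\<in>{1..m}. a i \<noteq> 0 \<and> irreducible (d i) \<and> degree (a i) < degree (d i)"
    and "\<forall>i\<in>{1..m}. \<forall>j\<in>{1..m}. i \<noteq> j \<longrightarrow> \<not> same_orbit kd q (d i) (d j)"
  shows "exact_phi kd q f \<longleftrightarrow>
    (\<forall>i\<in>{1..m}. (\<forall>j. degree (coeff (d i) j) = 0) \<and>
                 (\<exists>b. a i = phi_y kd q b - b))"
proof
  assume "exact_phi kd q f"
  then obtain g' h' where fe: "f = phi_xy kd q g' - g' + Dy h'" unfolding exact_phi_def by blast
  have "(\<Sum>i=1..m. Fract (a i) (emb_xy (d i))) = (phi_xy kd q g' - phi_xy kd q g) - (g' - g) + (Dy h' - Dy h)"
    by (rule lin4[OF assms(3) fe])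
  also have "\<dots> = phi_xy kd q (g' - g) - (g' - g) + Dy (h' - h)"
    by (simp add: phi_xy_diff[OF assms(1)] Dy_diff)
  finally have SG: "(\<Sum>i=1..m. Fract (a i) (emb_xy (d i))) = phi_xy kd q (g' - g) - (g' - g) + Dy (h' - h)" .
  show "\<forall>i\<in>{1..m}. (\<forall>j. degree (coeff (d i) j) = 0) \<and> (\<exists>b. a i = phi_y kd q b - b)"
    using main_dir[OF assms(1,2,4,5) SG] by blast
next
  assume c: "\<forall>i\<in>{1..m}. (\<forall>j. degree (coeff (d i) j) = 0) \<and> (\<exists>b. a i = phi_y kd q b - b)"
  have nz: "\<forall>i\<in>{1..m}. d i \<noteq> 0" using assms(4) by (auto simp: irreducible_def)
  from conv_dir[OF assms(1) nz c] obtain G where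
    G: "(\<Sum>i=1..m. Fract (a i) (emb_xy (d i))) = phi_xy kd q G - G" by blast
  have "f = (phi_xy kd q g + phi_xy kd q G) - (g + G) + Dy h" by (rule lin5[OF assms(3) G])
  also have "\<dots> = phi_xy kd q (g + G) - (g + G) + Dy h" by (simp add: phi_xy_add[OF assms(1)])
  finally show "exact_phi kd q f" unfolding exact_phi_def by blast
qed

end
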